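(* Fix a joint distribution of $(T,X)$ satisfying the conditions in the context, and let $b^\star(t,x)=f_X(x)\,w(t,x)$ be the full NRWE weights. Suppose there exists a weight function $a:\mathbb R\times\mathcal X\to\mathbb R$ such that: (1) for every data-generating process of the form $Y=m(T,X)+\varepsilon$, $E[\varepsilon\mid T,X]=0$, with $t\mapsto m(t,x)$ differentiable with continuous derivative $\partial_t m(t,x)$ and $E[|\partial_t m(T,X)|]<\infty$, and with this fixed distribution of $(T,X)$, the population OLS coefficient $\beta$ on $T$ satisfies $\beta=\int\!\!\int \partial_t m(t,x)\,a(t,x)\,dt\,dx$; and (2) for each $x$, the map $t\mapsto a(t,x)$ is continuous and differentiable on $\mathbb R$, and $\int\!\!\int |a(t,x)|\,dt\,dx<\infty$. Then $a(t,x)=b^\star(t,x)$ for almost every $(t,x)$.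
   Context: Fix a joint distribution of $(T,X)$ ($T$ a continuous variable of interest, $X$ a vector of controls containing a constant, with support $\mathcal X$). Assume that for almost every $x\in\mathcal X$, the conditional distribution of $T$ given $X=x$ admits a density $f_{T\mid X}(\cdot\mid x)$ with $0<\mathrm{Var}(T\mid X=x)<\infty$, and $E[Y\mid t,x]<\infty$ for every $t,x$. Consider data-generating processes $Y=m(T,X)+\varepsilon$ with $E[\varepsilon\mid T,X]=0$, where for each $x$, $t\mapsto m(t,x)$ is differentiable with continuous derivative $\partial_t m(t,x)$ and $E[|\partial_t m(T,X)|]<\infty$. For each such process, $\beta$ is the coefficient on $T$ in the population OLS regression of $Y$ on $T$ and $X$. Let $\mu(x)=E[T\mid X=x]$ and assume $E[T\mid X]$ is a linear function of $X$, so that (by the paper's multivariate Yitzhaki theorem) $\beta$ equals the Naive Regression-Weighted Effect $\mathrm{NRWE}=E_X\big[\int \partial_t E[Y\mid t,X]\,w(t,X)\,dt\big]$, with within-cell weights $w(t,x)=\dfrac{E[T-\mu(x)\mid T>t,X=x]\,P(T>t\mid X=x)}{E_X[\mathrm{Var}(T\mid X)]}$. The full NRWE weights are $b^\star(t,x)=f_X(x)\,w(t,x)$, where $f_X$ is the density of $X$, so that $\beta=\int\!\!\int \partial_t m(t,x)\,b^\star(t,x)\,dt\,dx$. *)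

theory Defs
  imports "HOL-Analysis.Analysis"
begin

text \<open>X has density fX with respect to a
  sigma-finite reference measure nu on real^'k (the measure "dx"); the conditional density
  of T given X = x (w.r.t. Lebesgue measure) is fT x.\<close>

definition supp_X :: "('x \<Rightarrow> real) \<Rightarrow> 'x set" where
  "supp_X fX = {x. 0 < fX x}"

definition joint_law :: "'x measure \<Rightarrow> ('x \<Rightarrow> real) \<Rightarrow> ('x \<Rightarrow> real \<Rightarrow> real) \<Rightarrow> (real \<times> 'x) measure" where
  "joint_law nu fX fT = density (lborel \<Otimes>\<^sub>M nu) (\<lambda>z. ennreal (fX (snd z) * fT (snd z) (fst z)))"

definition cond_mean :: "('x \<Rightarrow> real \<Rightarrow> real) \<Rightarrow> 'x \<Rightarrow> real" where
  "cond_mean fT x = (\<integral>s. s * fT x s \<partial>lborel)"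

definition cond_var :: "('x \<Rightarrow> real \<Rightarrow> real) \<Rightarrow> 'x \<Rightarrow> real" where
  "cond_var fT x = (\<integral>s. (s - cond_mean fT x)\<^sup>2 * fT x s \<partial>lborel)"

definition mean_cond_var :: "'x measure \<Rightarrow> ('x \<Rightarrow> real) \<Rightarrow> ('x \<Rightarrow> real \<Rightarrow> real) \<Rightarrow> real" where
  "mean_cond_var nu fX fT = (\<integral>x. fX x * cond_var fT x \<partial>nu)"

definition cond_surv :: "('x \<Rightarrow> real \<Rightarrow> real) \<Rightarrow> real \<Rightarrow> 'x \<Rightarrow> real" where
  "cond_surv fT t x = (LINT s:{t<..}|lborel. fT x s)"

definition cond_dev_gt :: "('x \<Rightarrow> real \<Rightarrow> real) \<Rightarrow> real \<Rightarrow> 'x \<Rightarrow> real" where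
  "cond_dev_gt fT t x = (LINT s:{t<..}|lborel. (s - cond_mean fT x) * fT x s) / cond_surv fT t x"

definition nrwe_w :: "'x measure \<Rightarrow> ('x \<Rightarrow> real) \<Rightarrow> ('x \<Rightarrow> real \<Rightarrow> real) \<Rightarrow> real \<Rightarrow> 'x \<Rightarrow> real" where
  "nrwe_w nu fX fT t x = cond_dev_gt fT t x * cond_surv fT t x / mean_cond_var nu fX fT"

definition nrwe_bstar :: "'x measure \<Rightarrow> ('x \<Rightarrow> real) \<Rightarrow> ('x \<Rightarrow> real \<Rightarrow> real) \<Rightarrow> real \<Rightarrow> 'x \<Rightarrow> real" where
  "nrwe_bstar nu fX fT t x = fX x * nrwe_w nu fX fT t x"

text \<open>Population OLS of Y on T and X (X :: real^'k contains the constant): normal equations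
  for coefficient b on T and c on X.\<close>
definition ols_normal_eqs ::
  "(real \<times> (real^'k)) measure \<Rightarrow> (real \<times> (real^'k) \<Rightarrow> real) \<Rightarrow> real \<Rightarrow> real^'k \<Rightarrow> bool" where
  "ols_normal_eqs P Y b c \<longleftrightarrow>
     (let r = (\<lambda>z. Y z - b * fst z - inner c (snd z)) in
       integrable P (\<lambda>z. r z * fst z) \<and> (\<integral>z. r z * fst z \<partial>P) = 0 \<and>
       (\<forall>j. integrable P (\<lambda>z. r z * (snd z $ j)) \<and> (\<integral>z. r z * (snd z $ j) \<partial>P) = 0))"

definition ols_defined :: "(real \<times> (real^'k)) measure \<Rightarrow> (real \<times> (real^'k) \<Rightarrow> real) \<Rightarrow> bool" where
  "ols_defined P Y \<longleftrightarrow> (\<exists>!b. \<exists>c. ols_normal_eqs P Y b c)"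

definition ols_coef_T :: "(real \<times> (real^'k)) measure \<Rightarrow> (real \<times> (real^'k) \<Rightarrow> real) \<Rightarrow> real" where
  "ols_coef_T P Y = (THE b. \<exists>c. ols_normal_eqs P Y b c)"

text \<open>Admissible regression functions m(t,x) = E[Y | T=t, X=x] with derivative dm = d/dt m:
  t \<mapsto> m(t,x) differentiable with continuous derivative for each x, and E|dm(T,X)| < \<infinity>.\<close>
definition admissible_dgp ::
  "(real \<times> 'x) measure \<Rightarrow> (real \<Rightarrow> 'x \<Rightarrow> real) \<Rightarrow> (real \<Rightarrow> 'x \<Rightarrow> real) \<Rightarrow> bool" where
  "admissible_dgp P m dm \<longleftrightarrow>
     (\<forall>x t. ((\<lambda>s. m s x) has_real_derivative dm t x) (at t)) \<and>
     (\<forall>x. continuous_on UNIV (\<lambda>t. dm t x)) \<and>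
     integrable P (\<lambda>z. dm (fst z) (snd z))"

end

theory Submission
  imports Defs
begin


lemma abs_le_1_sq: "\<bar>t::real\<bar> \<le> 1 + t\<^sup>2"
proof (cases "\<bar>t\<bar> \<le> 1")
  case False
  then have "\<bar>t\<bar> * 1 \<le> \<bar>t\<bar> * \<bar>t\<bar>" by (intro mult_left_mono) auto
  also have "\<dots> = t\<^sup>2" by (simp add: power2_eq_square)
  finally show ?thesis by simp
next
  case True
  then show ?thesis using zero_le_power2[of t] by linarith
qed

lemma vec_nth_meas[measurable (raw)]:
  fixes f :: "'a \<Rightarrow> real^'n"
  assumes "f \<in> borel_measurable M"
  shows "(\<lambda>z. f z $ j) \<in> borel_measurable M"
proof -
  have "(\<lambda>x::real^'n. x $ j) \<in> borel_measurable borel"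
    by (intro borel_measurable_continuous_onI continuous_intros)
  from measurable_compose[OF assms this] show ?thesis .
qed

locale nrwe =
  fixes nu :: "(real^'k) measure" and fX :: "real^'k \<Rightarrow> real"
    and fT :: "real^'k \<Rightarrow> real \<Rightarrow> real" and \<gamma> :: "real^'k"
  assumes sf: "sigma_finite_measure nu" and sets_nu[measurable_cong]: "sets nu = sets borel"
    and fX_meas[measurable]: "fX \<in> borel_measurable nu"
    and fX_nonneg: "\<And>x. 0 \<le> fX x"
    and fX_prob: "(\<integral>\<^sup>+x. ennreal (fX x) \<partial>nu) = 1"
    and fT_meas[measurable]: "(\<lambda>z. fT (snd z) (fst z)) \<in> borel_measurable (lborel \<Otimes>\<^sub>M nu)"
    and fT_nonneg: "\<And>x t. 0 \<le> fT x t"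
    and good: "AE x in nu. x \<in> supp_X fX \<longrightarrow>
           (\<integral>\<^sup>+t. ennreal (fT x t) \<partial>lborel) = 1 \<and>
           integrable lborel (\<lambda>t. t\<^sup>2 * fT x t) \<and> 0 < cond_var fT x \<and> cond_mean fT x = inner \<gamma> x"
    and T_sq: "integrable (joint_law nu fX fT) (\<lambda>z. (fst z)\<^sup>2)"
    and X_sq: "\<And>j. integrable (joint_law nu fX fT) (\<lambda>z. (snd z $ j)\<^sup>2)"
begin

abbreviation "S \<equiv> supp_X fX"
abbreviation "P \<equiv> joint_law nu fX fT"
abbreviation "V \<equiv> mean_cond_var nu fX fT"

lemma pair: "pair_sigma_finite lborel nu"
  unfolding pair_sigma_finite_def using sf lborel.sigma_finite_measure_axioms by simp

lemma sets_P[measurable_cong]: "sets P = sets (lborel \<Otimes>\<^sub>M nu)"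
  by (simp add: joint_law_def)

lemma space_nu: "space nu = UNIV"
  using sets_eq_imp_space_eq[OF sets_nu] by simp

lemma space_P: "space P = UNIV"
  by (simp add: joint_law_def space_pair_measure space_nu)

lemma fT_meas'[measurable]: "(\<lambda>(t,x). fT x t) \<in> borel_measurable (lborel \<Otimes>\<^sub>M nu)"
  using fT_meas by (simp add: case_prod_beta')

lemma S_meas[measurable]: "S \<in> sets nu"
  unfolding supp_X_def by measurable

lemma dens_meas[measurable]: "(\<lambda>z. fX (snd z) * fT (snd z) (fst z)) \<in> borel_measurable (lborel \<Otimes>\<^sub>M nu)"
  by measurable

lemma int_P_iff:
  assumes [measurable]: "g \<in> borel_measurable (lborel \<Otimes>\<^sub>M nu)"
  shows "integrable P g \<longleftrightarrow> integrable (lborel \<Otimes>\<^sub>M nu) (\<lambda>z. fX (snd z) * fT (snd z) (fst z) * g z)"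
  unfolding joint_law_def
  by (subst integrable_density) (auto simp: fX_nonneg fT_nonneg)

lemma int_P:
  assumes g: "integrable P g"
  shows "integral\<^sup>L P g = (\<integral>x. fX x * (\<integral>t. fT x t * g (t,x) \<partial>lborel) \<partial>nu)"
proof -
  have gm[measurable]: "g \<in> borel_measurable (lborel \<Otimes>\<^sub>M nu)"
    using borel_measurable_integrable[OF g] by (simp add: measurable_cong_sets[OF sets_P refl])
  have i: "integrable (lborel \<Otimes>\<^sub>M nu) (\<lambda>z. fX (snd z) * fT (snd z) (fst z) * g z)"
    using g int_P_iff[OF gm] by simp
  have "integral\<^sup>L P g = (\<integral>z. fX (snd z) * fT (snd z) (fst z) * g z \<partial>(lborel \<Otimes>\<^sub>M nu))"
    unfolding joint_law_def
    by (subst integral_density) (auto simp: fX_nonneg fT_nonneg)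
  also have "\<dots> = (\<integral>x. (\<integral>t. fX x * fT x t * g (t,x) \<partial>lborel) \<partial>nu)"
    using pair_sigma_finite.integral_snd[OF pair, of "\<lambda>t x. fX x * fT x t * g (t,x)"] i
    by (simp add: case_prod_beta')
  also have "\<dots> = (\<integral>x. fX x * (\<integral>t. fT x t * g (t,x) \<partial>lborel) \<partial>nu)"
    by (simp add: mult.assoc)
  finally show ?thesis .
qed

lemma fT_meas_raw[measurable (raw)]:
  assumes "f \<in> borel_measurable M" "g \<in> borel_measurable M"
  shows "(\<lambda>z. fT (f z) (g z)) \<in> borel_measurable M"
proof -
  have "(\<lambda>z. (g z, f z)) \<in> measurable M (lborel \<Otimes>\<^sub>M nu)"
    using assms by (intro measurable_Pair) (auto simp: measurable_cong_sets[OF refl sets_nu])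
  from measurable_compose[OF this fT_meas] show ?thesis by simp
qed

lemma fX_meas_raw[measurable (raw)]:
  assumes "f \<in> borel_measurable M"
  shows "(\<lambda>z. fX (f z)) \<in> borel_measurable M"
proof -
  have "f \<in> measurable M nu"
    using assms by (auto simp: measurable_cong_sets[OF refl sets_nu])
  from measurable_compose[OF this fX_meas] show ?thesis by simp
qed

lemma fTx_meas[measurable]: "fT x \<in> borel_measurable lborel"
  by measurable

definition goodx :: "real^'k \<Rightarrow> bool" where
  "goodx x \<longleftrightarrow> x \<in> S \<and> (\<integral>\<^sup>+t. ennreal (fT x t) \<partial>lborel) = 1 \<and>
           integrable lborel (\<lambda>t. t\<^sup>2 * fT x t) \<and> 0 < cond_var fT x \<and> cond_mean fT x = inner \<gamma> x"

lemma AE_good: "AE x in nu. x \<in> S \<longrightarrow> goodx x"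
  using good by eventually_elim (auto simp: goodx_def)

lemma AE_good': "AE x in nu. fX x * g x = (if goodx x then fX x * g x else 0)"
  using AE_good by eventually_elim (auto simp: goodx_def supp_X_def fX_nonneg less_le)

context fixes x assumes gx: "goodx x"
begin

lemma gx_S: "x \<in> S" and gx_int1: "integrable lborel (fT x)" and gx_one: "(\<integral>t. fT x t \<partial>lborel) = 1"
  and gx_int2: "integrable lborel (\<lambda>t. t\<^sup>2 * fT x t)"
  and gx_var: "0 < cond_var fT x" and gx_mu: "cond_mean fT x = inner \<gamma> x"
proof -
  have nn: "(\<integral>\<^sup>+t. ennreal (fT x t) \<partial>lborel) = ennreal 1" using gx by (simp add: goodx_def)
  show i: "integrable lborel (fT x)"
    using integrableI_nn_integral_finite[OF _ _ nn] by (auto simp: fT_nonneg)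
  have "ennreal (\<integral>t. fT x t \<partial>lborel) = ennreal 1"
    using nn nn_integral_eq_integral[OF i] by (simp add: fT_nonneg)
  moreover have "0 \<le> (\<integral>t. fT x t \<partial>lborel)" by (simp add: fT_nonneg)
  ultimately show "(\<integral>t. fT x t \<partial>lborel) = 1" by (simp add: ennreal_inj)
qed (use gx in \<open>auto simp: goodx_def\<close>)

lemma gx_int_t: "integrable lborel (\<lambda>t. t * fT x t)"
proof (rule Bochner_Integration.integrable_bound[OF Bochner_Integration.integrable_add[OF gx_int1 gx_int2]])
  show "AE t in lborel. norm (t * fT x t) \<le> norm (fT x t + t\<^sup>2 * fT x t)"
  proof (intro AE_I2)
    fix t :: real
    have "\<bar>t\<bar> \<le> 1 + t\<^sup>2" by (rule abs_le_1_sq)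
    hence "\<bar>t\<bar> * fT x t \<le> (1 + t\<^sup>2) * fT x t" by (rule mult_right_mono) (simp add: fT_nonneg)
    thus "norm (t * fT x t) \<le> norm (fT x t + t\<^sup>2 * fT x t)"
      using fT_nonneg[of x t] by (simp add: abs_mult algebra_simps)
  qed
qed measurable

lemma gx_mean: "(\<integral>t. t * fT x t \<partial>lborel) = inner \<gamma> x"
  using gx_mu by (simp add: cond_mean_def)

lemma gx_var_eq: "cond_var fT x = (\<integral>t. t\<^sup>2 * fT x t \<partial>lborel) - (inner \<gamma> x)\<^sup>2"
proof -
  let ?m = "inner \<gamma> x"
  have "cond_var fT x = (\<integral>t. t\<^sup>2 * fT x t - 2 * ?m * (t * fT x t) + ?m\<^sup>2 * fT x t \<partial>lborel)"
    unfolding cond_var_def gx_mu by (intro Bochner_Integration.integral_cong) (auto simp: power2_eq_square algebra_simps)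
  also have "\<dots> = (\<integral>t. t\<^sup>2 * fT x t \<partial>lborel) - 2 * ?m * ?m + ?m\<^sup>2 * 1"
    using gx_int1 gx_int2 gx_int_t gx_mean gx_one by simp
  finally show ?thesis by (simp add: power2_eq_square)
qed

end

end


context nrwe begin

lemma int_P_integrable:
  assumes g: "integrable P g"
  shows "integrable nu (\<lambda>x. fX x * (\<integral>t. fT x t * g (t,x) \<partial>lborel))"
proof -
  have gm[measurable]: "g \<in> borel_measurable (lborel \<Otimes>\<^sub>M nu)"
    using borel_measurable_integrable[OF g] by (simp add: measurable_cong_sets[OF sets_P refl])
  have i: "integrable (lborel \<Otimes>\<^sub>M nu) (\<lambda>z. fX (snd z) * fT (snd z) (fst z) * g z)"
    using g int_P_iff[OF gm] by simp
  have "integrable nu (\<lambda>x. (\<integral>t. fX x * fT x t * g (t,x) \<partial>lborel))"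
    using pair_sigma_finite.integrable_snd[OF pair, of "\<lambda>t x. fX x * fT x t * g (t,x)"] i
    by (simp add: case_prod_beta')
  then show ?thesis by (simp add: mult.assoc)
qed

lemma cond_mean_meas[measurable]: "cond_mean fT \<in> borel_measurable nu"
  unfolding cond_mean_def by measurable
lemma cond_var_meas[measurable]: "cond_var fT \<in> borel_measurable nu"
  unfolding cond_var_def by measurable

lemma AE_notgood: "AE x in nu. \<not> goodx x \<longrightarrow> fX x = 0"
  using AE_good by eventually_elim (auto simp: goodx_def supp_X_def fX_nonneg less_le)

lemma sq_prod_int:
  fixes f g :: "real \<times> (real^'k) \<Rightarrow> real"
  assumes [measurable]: "f \<in> borel_measurable (lborel \<Otimes>\<^sub>M nu)" "g \<in> borel_measurable (lborel \<Otimes>\<^sub>M nu)"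
    and "integrable P (\<lambda>z. (f z)\<^sup>2)" "integrable P (\<lambda>z. (g z)\<^sup>2)"
  shows "integrable P (\<lambda>z. f z * g z)"
proof -
  have m: "(\<lambda>z. f z * g z) \<in> borel_measurable P"
    unfolding measurable_cong_sets[OF sets_P refl] using assms(1,2) by (rule borel_measurable_times)
  have "AE z in P. norm (f z * g z) \<le> norm ((f z)\<^sup>2 + (g z)\<^sup>2)"
  proof (intro AE_I2)
    fix z
    have "2 * \<bar>f z\<bar> * \<bar>g z\<bar> \<le> (f z)\<^sup>2 + (g z)\<^sup>2"
      using sum_squares_bound[of "\<bar>f z\<bar>" "\<bar>g z\<bar>"] by (simp add: power2_eq_square)
    moreover have "0 \<le> \<bar>f z\<bar> * \<bar>g z\<bar>" by simp
    ultimately have "\<bar>f z * g z\<bar> \<le> (f z)\<^sup>2 + (g z)\<^sup>2"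
      unfolding abs_mult by linarith
    then show "norm (f z * g z) \<le> norm ((f z)\<^sup>2 + (g z)\<^sup>2)"
      by simp
  qed
  from Bochner_Integration.integrable_bound[OF Bochner_Integration.integrable_add[OF assms(3,4)] m this]
  show ?thesis .
qed

lemma int_TT: "integrable P (\<lambda>z. fst z * fst z)"
  by (rule sq_prod_int[OF _ _ T_sq T_sq]) measurable
lemma int_XT: "integrable P (\<lambda>z. snd z $ j * fst z)"
  by (rule sq_prod_int[OF _ _ X_sq T_sq]) measurable
lemma int_XX: "integrable P (\<lambda>z. snd z $ i * snd z $ j)"
  by (rule sq_prod_int[OF _ _ X_sq X_sq]) measurable

definition D :: "real \<times> (real^'k) \<Rightarrow> real" where "D z = fst z - inner \<gamma> (snd z)"

lemma D_meas[measurable]: "D \<in> borel_measurable (lborel \<Otimes>\<^sub>M nu)"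
  unfolding D_def by measurable

lemma D_expand: "f * D z = f * fst z - (\<Sum>i\<in>UNIV. \<gamma> $ i * (f * snd z $ i))"
  unfolding D_def inner_vec_def by (simp add: algebra_simps sum_distrib_left)

lemma int_fD:
  assumes "integrable P (\<lambda>z. f z * fst z)" "\<And>i. integrable P (\<lambda>z. f z * snd z $ i)"
  shows "integrable P (\<lambda>z. f z * D z)"
  unfolding D_expand using assms by (intro Bochner_Integration.integrable_diff integrable_sum integrable_mult_right) auto

lemma integral_fD:
  assumes "integrable P (\<lambda>z. f z * fst z)" "\<And>i. integrable P (\<lambda>z. f z * snd z $ i)"
  shows "integral\<^sup>L P (\<lambda>z. f z * D z) = integral\<^sup>L P (\<lambda>z. f z * fst z) - (\<Sum>i\<in>UNIV. \<gamma> $ i * integral\<^sup>L P (\<lambda>z. f z * snd z $ i))"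
  unfolding D_expand using assms
  by (subst Bochner_Integration.integral_diff) (auto intro!: integrable_sum simp: integral_sum)

lemma int_XD: "integrable P (\<lambda>z. snd z $ j * D z)"
  by (rule int_fD) (use int_XT int_XX in auto)

lemma int_TD: "integrable P (\<lambda>z. fst z * D z)"
  by (rule int_fD) (use int_TT int_XT in \<open>auto simp: mult.commute\<close>)

lemma integral_XD: "integral\<^sup>L P (\<lambda>z. snd z $ j * D z) = 0"
proof -
  have "integral\<^sup>L P (\<lambda>z. snd z $ j * D z) =
     (\<integral>x. fX x * (\<integral>t. fT x t * (x $ j * D (t, x)) \<partial>lborel) \<partial>nu)"
    using int_P[OF int_XD] by simp
  also have "\<dots> = (\<integral>x. 0 \<partial>nu)"
  proof (intro integral_cong_AE)
    show "AE x in nu. fX x * (\<integral>t. fT x t * (x $ j * D (t, x)) \<partial>lborel) = 0"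
      using AE_notgood
    proof eventually_elim
      case (elim x)
      show ?case
      proof (cases "goodx x")
        case True
        have "(\<integral>t. fT x t * (x $ j * D (t, x)) \<partial>lborel) =
              (\<integral>t. x $ j * (t * fT x t) - x $ j * inner \<gamma> x * fT x t \<partial>lborel)"
          by (intro Bochner_Integration.integral_cong) (auto simp: D_def algebra_simps)
        also have "\<dots> = 0"
          using gx_int1[OF True] gx_int_t[OF True] gx_mean[OF True] gx_one[OF True] by simp
        finally show ?thesis by simp
      qed (use elim in simp)
    qed
  qed (measurable; fail)+
  finally show ?thesis by simp
qed

lemma integral_TD: "integral\<^sup>L P (\<lambda>z. fst z * D z) = V"
proof -
  have "integral\<^sup>L P (\<lambda>z. fst z * D z) =
     (\<integral>x. fX x * (\<integral>t. fT x t * (t * D (t, x)) \<partial>lborel) \<partial>nu)"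
    using int_P[OF int_TD] by simp
  also have "\<dots> = (\<integral>x. fX x * cond_var fT x \<partial>nu)"
  proof (intro integral_cong_AE)
    show "AE x in nu. fX x * (\<integral>t. fT x t * (t * D (t, x)) \<partial>lborel) = fX x * cond_var fT x"
      using AE_notgood
    proof eventually_elim
      case (elim x)
      show ?case
      proof (cases "goodx x")
        case True
        have "(\<integral>t. fT x t * (t * D (t, x)) \<partial>lborel) =
              (\<integral>t. t\<^sup>2 * fT x t - inner \<gamma> x * (t * fT x t) \<partial>lborel)"
          by (intro Bochner_Integration.integral_cong) (auto simp: D_def algebra_simps power2_eq_square)
        also have "\<dots> = cond_var fT x"
          using gx_int2[OF True] gx_int_t[OF True] gx_mean[OF True] gx_var_eq[OF True]
          by (simp add: power2_eq_square)
        finally show ?thesis by simp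
      qed (use elim in simp)
    qed
  qed (measurable; fail)+
  finally show ?thesis by (simp add: mean_cond_var_def)
qed

end


context nrwe begin

lemma AE_TD: "AE x in nu. fX x * (\<integral>t. fT x t * (t * D (t, x)) \<partial>lborel) = fX x * cond_var fT x"
  using AE_notgood
proof eventually_elim
  case (elim x)
  show ?case
  proof (cases "goodx x")
    case True
    have "(\<integral>t. fT x t * (t * D (t, x)) \<partial>lborel) =
          (\<integral>t. t\<^sup>2 * fT x t - inner \<gamma> x * (t * fT x t) \<partial>lborel)"
      by (intro Bochner_Integration.integral_cong) (auto simp: D_def algebra_simps power2_eq_square)
    also have "\<dots> = cond_var fT x"
      using gx_int2[OF True] gx_int_t[OF True] gx_mean[OF True] gx_var_eq[OF True]
      by (simp add: power2_eq_square)
    finally show ?thesis by simp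
  qed (use elim in simp)
qed

lemma V_pos: "0 < V"
proof -
  have i: "integrable nu (\<lambda>x. fX x * cond_var fT x)"
    using int_P_integrable[OF int_TD] AE_TD
    by (subst integrable_cong_AE[symmetric]) (auto elim!: eventually_mono)
  have nn: "AE x in nu. 0 \<le> fX x * cond_var fT x"
    using AE_notgood
  proof eventually_elim
    case (elim x)
    then show ?case
      using gx_var[of x] fX_nonneg[of x] by (cases "goodx x") auto
  qed
  have "V \<noteq> 0"
  proof
    assume "V = 0"
    then have "AE x in nu. fX x * cond_var fT x = 0"
      using integral_nonneg_eq_0_iff_AE[OF i nn] by (simp add: mean_cond_var_def)
    then have "AE x in nu. fX x = 0"
      using AE_good
    proof eventually_elim
      case (elim x)
      then show ?case
        using gx_var[of x] fX_nonneg[of x] by (cases "x \<in> S") (auto simp: supp_X_def)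
    qed
    then have "(\<integral>\<^sup>+x. ennreal (fX x) \<partial>nu) = (\<integral>\<^sup>+x. 0 \<partial>nu)"
      by (intro nn_integral_cong_AE) (auto elim!: eventually_mono)
    then show False using fX_prob by simp
  qed
  moreover have "0 \<le> V"
    unfolding mean_cond_var_def using nn by (rule integral_nonneg_AE)
  ultimately show ?thesis by simp
qed

lemma ols:
  assumes iT: "integrable P (\<lambda>z. Y z * fst z)" and iX: "\<And>j. integrable P (\<lambda>z. Y z * snd z $ j)"
    and eX: "\<And>j. integral\<^sup>L P (\<lambda>z. Y z * snd z $ j) = 0"
    and eT: "integral\<^sup>L P (\<lambda>z. Y z * fst z) = V * B"
  shows "ols_defined P Y \<and> ols_coef_T P Y = B"
proof -
  have uniq: "b = B" if eqs: "ols_normal_eqs P Y b c" for b c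
  proof -
    define r where "r = (\<lambda>z. Y z - b * fst z - inner c (snd z))"
    have rT: "integrable P (\<lambda>z. r z * fst z)" "integral\<^sup>L P (\<lambda>z. r z * fst z) = 0"
      and rX: "\<And>j. integrable P (\<lambda>z. r z * snd z $ j)" "\<And>j. integral\<^sup>L P (\<lambda>z. r z * snd z $ j) = 0"
      using eqs unfolding ols_normal_eqs_def r_def Let_def by auto
    have "integral\<^sup>L P (\<lambda>z. r z * D z) = 0"
      using integral_fD[of r, OF rT(1) rX(1)] rT(2) rX(2) by simp
    moreover have "integral\<^sup>L P (\<lambda>z. r z * D z) = V * B - b * V"
    proof -
      have eq: "r z * D z = Y z * D z - b * (fst z * D z) - (\<Sum>i\<in>UNIV. c $ i * (snd z $ i * D z))" for z
        unfolding r_def inner_vec_def by (simp add: algebra_simps sum_distrib_left sum_distrib_right)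
      have iY: "integrable P (\<lambda>z. Y z * D z)" by (rule int_fD[OF iT iX])
      have "integral\<^sup>L P (\<lambda>z. r z * D z) =
        integral\<^sup>L P (\<lambda>z. Y z * D z) - b * integral\<^sup>L P (\<lambda>z. fst z * D z) - (\<Sum>i\<in>UNIV. c $ i * integral\<^sup>L P (\<lambda>z. snd z $ i * D z))"
        unfolding eq using iY int_TD int_XD
        by (subst Bochner_Integration.integral_diff, (auto intro!: integrable_sum)[2])
           (subst Bochner_Integration.integral_diff, auto simp: integral_sum)
      also have "integral\<^sup>L P (\<lambda>z. Y z * D z) = V * B"
        using integral_fD[of Y, OF iT iX] eT eX by simp
      finally show ?thesis using integral_TD integral_XD by simp
    qed
    ultimately have "V * B = b * V" by simp
    then show ?thesis using V_pos by simp
  qed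
  have ex: "ols_normal_eqs P Y B (- B *\<^sub>R \<gamma>)"
  proof -
    have req: "Y z - B * fst z - inner (- B *\<^sub>R \<gamma>) (snd z) = Y z - B * D z" for z
      by (simp add: D_def algebra_simps)
    have eqa: "(Y z - B * D z) * fst z = Y z * fst z - B * (fst z * D z)" for z
      by (simp add: algebra_simps)
    have eqc: "(Y z - B * D z) * snd z $ j = Y z * snd z $ j - B * (snd z $ j * D z)" for z j
      by (simp add: algebra_simps)
    have a: "integrable P (\<lambda>z. (Y z - B * D z) * fst z)"
      unfolding eqa using iT int_TD by simp
    have b: "integral\<^sup>L P (\<lambda>z. (Y z - B * D z) * fst z) = 0"
    proof -
      have "integral\<^sup>L P (\<lambda>z. (Y z - B * D z) * fst z) = integral\<^sup>L P (\<lambda>z. Y z * fst z - B * (fst z * D z))"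
        unfolding eqa ..
      also have "\<dots> = V * B - B * V"
        using iT int_TD eT integral_TD by simp
      finally show ?thesis by simp
    qed
    have c: "integrable P (\<lambda>z. (Y z - B * D z) * snd z $ j)" for j
      unfolding eqc using iX[of j] int_XD[of j] by simp
    have d: "integral\<^sup>L P (\<lambda>z. (Y z - B * D z) * snd z $ j) = 0" for j
    proof -
      have "integral\<^sup>L P (\<lambda>z. (Y z - B * D z) * snd z $ j) = integral\<^sup>L P (\<lambda>z. Y z * snd z $ j - B * (snd z $ j * D z))"
        unfolding eqc ..
      also have "\<dots> = 0"
        using iX[of j] int_XD[of j] eX[of j] integral_XD[of j] by simp
      finally show ?thesis .
    qed
    show ?thesis unfolding ols_normal_eqs_def Let_def req using a b c d by auto
  qed
  have "ols_defined P Y" unfolding ols_defined_def using ex uniq by blast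
  moreover have "ols_coef_T P Y = B"
    unfolding ols_coef_T_def using ex uniq by blast
  ultimately show ?thesis by simp
qed

end


locale testfn =
  fixes \<phi> :: "real \<Rightarrow> real" and p q :: real
  assumes cont: "continuous_on UNIV \<phi>" and bnd: "\<And>u. \<bar>\<phi> u\<bar> \<le> 1"
    and supp: "\<And>u. u \<le> p \<or> q \<le> u \<Longrightarrow> \<phi> u = 0" and pq: "p < q"
begin

lemma phi_meas[measurable]: "\<phi> \<in> borel_measurable borel"
  by (rule borel_measurable_continuous_onI[OF cont])

lemma phi_bound: "\<bar>\<phi> u\<bar> \<le> indicator {p..q} u"
  using bnd[of u] supp[of u] by (cases "u \<in> {p..q}") (auto simp: indicator_def)

lemma ind_int: "integrable lborel (indicator {p..q} :: real \<Rightarrow> real)"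
  using pq by (auto simp: integrable_indicator_iff)

lemma phi_int: "integrable lborel \<phi>"
  by (rule Bochner_Integration.integrable_bound[OF ind_int]) (auto simp: phi_bound intro!: AE_I2)

definition Phi :: "real \<Rightarrow> real" where
  "Phi t = (\<integral>u. \<phi> u * indicator {..<t} u \<partial>lborel)"

lemma Phi_eq:
  assumes "a < p"
  shows "Phi s = integral {a..s} \<phi>"
proof -
  have "Phi s = (\<integral>u. indicator {a..s} u *\<^sub>R \<phi> u \<partial>lborel)"
    unfolding Phi_def
  proof (intro integral_cong_AE)
    show "AE u in lborel. \<phi> u * indicator {..<s} u = indicator {a..s} u *\<^sub>R \<phi> u"
      using AE_lborel_singleton[of s]
    proof eventually_elim
      case (elim u)
      show ?case
        using supp[of u] assms elim by (auto simp: indicator_def)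
    qed
  qed measurable
  also have "\<dots> = (LINT u:{a..s}|lborel. \<phi> u)"
    by (simp add: set_lebesgue_integral_def)
  also have "\<dots> = integral {a..s} \<phi>"
    by (intro set_borel_integral_eq_integral borel_integrable_atLeastAtMost'
        continuous_on_subset[OF cont]) auto
  finally show ?thesis .
qed

lemma Phi_deriv: "(Phi has_real_derivative \<phi> t) (at t)"
proof -
  define a where "a = min p t - 1"
  have ap: "a < p" by (simp add: a_def)
  have "((\<lambda>x. integral {a..x} \<phi>) has_real_derivative \<phi> t) (at t within {a..t+1})"
    by (intro integral_has_real_derivative continuous_on_subset[OF cont]) (auto simp: a_def)
  moreover have "at t within {a..t+1} = at t"
    by (intro at_within_interior) (auto simp: a_def)
  ultimately have "((\<lambda>x. integral {a..x} \<phi>) has_real_derivative \<phi> t) (at t)" by simp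
  moreover have "Phi = (\<lambda>x. integral {a..x} \<phi>)"
    using Phi_eq[OF ap] by auto
  ultimately show ?thesis by simp
qed

lemma Phi_cont: "continuous_on UNIV Phi"
  using Phi_deriv DERIV_isCont continuous_at_imp_continuous_on by blast

lemma Phi_meas[measurable]: "Phi \<in> borel_measurable borel"
  by (rule borel_measurable_continuous_onI[OF Phi_cont])

lemma Phi_bound: "\<bar>Phi t\<bar> \<le> q - p"
proof -
  have b': "\<bar>\<phi> u * indicator {..<t} u\<bar> \<le> (indicator {p..q} u :: real)" for u
    using phi_bound[of u] by (auto split: split_indicator)
  have b: "norm (\<phi> u * indicator {..<t} u) \<le> norm (indicator {p..q} u :: real)" for u
    using b'[of u] by simp
  have ae: "AE u in lborel. norm (\<phi> u * indicator {..<t} u) \<le> norm (indicator {p..q} u :: real)"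
    by (intro AE_I2 b)
  have "(\<lambda>u. \<phi> u * indicator {..<t} u) \<in> borel_measurable lborel" by measurable
  from Bochner_Integration.integrable_bound[OF ind_int this ae]
  have i: "integrable lborel (\<lambda>u. \<phi> u * indicator {..<t} u)" .
  have "\<bar>Phi t\<bar> \<le> (\<integral>u. norm (\<phi> u * indicator {..<t} u) \<partial>lborel)"
    unfolding Phi_def using integral_norm_bound[of lborel "\<lambda>u. \<phi> u * indicator {..<t} u"] by simp
  also have "\<dots> \<le> (\<integral>u. indicator {p..q} u \<partial>lborel)"
  proof (rule integral_mono)
    show "integrable lborel (\<lambda>u. norm (\<phi> u * indicator {..<t} u))" using i by simp
    show "integrable lborel (\<lambda>u. indicator {p..q} u :: real)" by (rule ind_int)
    fix x show "norm (\<phi> x * indicator {..<t} x) \<le> (indicator {p..q} x :: real)"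
      using b'[of x] by simp
  qed
  also have "\<dots> = q - p" using pq by simp
  finally show ?thesis .
qed

lemma yitz:
  assumes w: "integrable lborel w"
  shows "(\<integral>t. Phi t * w t \<partial>lborel) = (\<integral>u. \<phi> u * (\<integral>t. indicator {u<..} t * w t \<partial>lborel) \<partial>lborel)"
proof -
  have L: "pair_sigma_finite lborel lborel"
    by (simp add: pair_sigma_finite_def lborel.sigma_finite_measure_axioms)
  have wm[measurable]: "w \<in> borel_measurable borel" using borel_measurable_integrable[OF w] by simp
  define F where "F = (\<lambda>u t. \<phi> u * (indicator {u<..} t * w t))"
  have Fm[measurable]: "case_prod F \<in> borel_measurable (lborel \<Otimes>\<^sub>M lborel)"
  proof -
    have "(\<lambda>z::real\<times>real. indicator {fst z<..} (snd z) :: real) = (\<lambda>z. if fst z < snd z then 1 else 0)"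
      by (auto simp: indicator_def fun_eq_iff)
    moreover have "(\<lambda>z::real\<times>real. if fst z < snd z then 1 else (0::real)) \<in> borel_measurable (lborel \<Otimes>\<^sub>M lborel)"
      by measurable
    ultimately have [measurable]: "(\<lambda>z::real\<times>real. indicator {fst z<..} (snd z) :: real) \<in> borel_measurable (lborel \<Otimes>\<^sub>M lborel)"
      by simp
    show ?thesis unfolding F_def case_prod_beta by measurable
  qed
  have intFu: "integrable lborel (\<lambda>t. F u t)" for u
    unfolding F_def
    by (rule Bochner_Integration.integrable_bound[OF integrable_mult_right[OF integrable_abs[OF w], of "\<bar>\<phi> u\<bar>"]])
       (auto intro!: AE_I2 simp: abs_mult split: split_indicator)
  have intF: "integrable (lborel \<Otimes>\<^sub>M lborel) (case_prod F)"
  proof (rule pair_sigma_finite.Fubini_integrable[OF L])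
    show "integrable lborel (\<lambda>u. \<integral>t. norm (case_prod F (u, t)) \<partial>lborel)"
    proof (rule Bochner_Integration.integrable_bound[OF integrable_mult_right[OF integrable_abs[OF phi_int], of "\<integral>t. \<bar>w t\<bar> \<partial>lborel"]])
      show "(\<lambda>u. \<integral>t. norm (case_prod F (u, t)) \<partial>lborel) \<in> borel_measurable lborel"
        using Fm by measurable
      show "AE u in lborel. norm (\<integral>t. norm (case_prod F (u, t)) \<partial>lborel) \<le> norm ((\<integral>t. \<bar>w t\<bar> \<partial>lborel) * \<bar>\<phi> u\<bar>)"
      proof (intro AE_I2)
        fix u
        have i1: "integrable lborel (\<lambda>t. norm (F u t))"
          unfolding F_def
          by (rule Bochner_Integration.integrable_bound[OF integrable_mult_right[OF integrable_abs[OF w], of "\<bar>\<phi> u\<bar>"]])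
             (auto intro!: AE_I2 simp: abs_mult split: split_indicator)
        have "(\<integral>t. norm (F u t) \<partial>lborel) \<le> (\<integral>t. \<bar>\<phi> u\<bar> * \<bar>w t\<bar> \<partial>lborel)"
          using i1 w by (intro integral_mono) (auto simp: F_def abs_mult split: split_indicator)
        also have "\<dots> = (\<integral>t. \<bar>w t\<bar> \<partial>lborel) * \<bar>\<phi> u\<bar>" by simp
        finally show "norm (\<integral>t. norm (case_prod F (u, t)) \<partial>lborel) \<le> norm ((\<integral>t. \<bar>w t\<bar> \<partial>lborel) * \<bar>\<phi> u\<bar>)"
          by (simp add: integral_nonneg_AE abs_mult)
      qed
    qed
    show "AE u in lborel. integrable lborel (\<lambda>t. case_prod F (u, t))"
    proof (intro AE_I2)
      fix u
      show "integrable lborel (\<lambda>t. case_prod F (u, t))"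
        using intFu[of u] by simp
    qed
  qed (rule Fm)
  have "(\<integral>t. (\<integral>u. F u t \<partial>lborel) \<partial>lborel) = (\<integral>u. (\<integral>t. F u t \<partial>lborel) \<partial>lborel)"
    by (rule pair_sigma_finite.Fubini_integral[OF L intF])
  moreover have "(\<integral>u. F u t \<partial>lborel) = Phi t * w t" for t
  proof -
    have "(\<integral>u. F u t \<partial>lborel) = (\<integral>u. (\<phi> u * indicator {..<t} u) * w t \<partial>lborel)"
      unfolding F_def by (intro Bochner_Integration.integral_cong) (auto split: split_indicator)
    also have "\<dots> = Phi t * w t" unfolding Phi_def by simp
    finally show ?thesis .
  qed
  moreover have "(\<integral>t. F u t \<partial>lborel) = \<phi> u * (\<integral>t. indicator {u<..} t * w t \<partial>lborel)" for u
    unfolding F_def by simp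
  ultimately show ?thesis by simp
qed

end


lemma ind_gt_meas[measurable (raw)]:
  fixes f g :: "'a \<Rightarrow> real"
  assumes [measurable]: "f \<in> borel_measurable M" "g \<in> borel_measurable M"
  shows "(\<lambda>z. indicator {f z<..} (g z) :: real) \<in> borel_measurable M"
proof -
  have "(\<lambda>z. indicator {f z<..} (g z) :: real) = (\<lambda>z. if f z < g z then 1 else 0)"
    by (auto simp: indicator_def fun_eq_iff)
  moreover have "(\<lambda>z. if f z < g z then 1 else (0::real)) \<in> borel_measurable M" by measurable
  ultimately show ?thesis by simp
qed

context nrwe begin

definition G :: "real \<Rightarrow> real^'k \<Rightarrow> real" where
  "G u x = (LINT s:{u<..}|lborel. (s - cond_mean fT x) * fT x s)"

definition H :: "real^'k \<Rightarrow> real" where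
  "H x = (\<integral>s. \<bar>s - cond_mean fT x\<bar> * fT x s \<partial>lborel)"

lemma G_meas[measurable]: "(\<lambda>z. G (fst z) (snd z)) \<in> borel_measurable (lborel \<Otimes>\<^sub>M nu)"
  unfolding G_def set_lebesgue_integral_def by measurable

lemma H_meas[measurable]: "H \<in> borel_measurable nu"
  unfolding H_def by measurable

lemma bstar_meas[measurable]: "(\<lambda>z. nrwe_bstar nu fX fT (fst z) (snd z)) \<in> borel_measurable (lborel \<Otimes>\<^sub>M nu)"
  unfolding nrwe_bstar_def nrwe_w_def cond_dev_gt_def cond_surv_def set_lebesgue_integral_def by measurable

context fixes x assumes gx: "goodx x"
begin

lemma gx_int_w: "integrable lborel (\<lambda>s. (s - cond_mean fT x) * fT x s)"
  using gx_int_t[OF gx] gx_int1[OF gx] by (simp add: algebra_simps)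

lemma gx_int_w2: "integrable lborel (\<lambda>s. (s - cond_mean fT x)\<^sup>2 * fT x s)"
proof -
  have "(\<lambda>s. (s - cond_mean fT x)\<^sup>2 * fT x s) =
     (\<lambda>s. s\<^sup>2 * fT x s - 2 * cond_mean fT x * (s * fT x s) + (cond_mean fT x)\<^sup>2 * fT x s)"
    by (auto simp: fun_eq_iff power2_eq_square algebra_simps)
  then show ?thesis using gx_int_t[OF gx] gx_int1[OF gx] gx_int2[OF gx] by simp
qed

lemma G_zero:
  assumes "cond_surv fT u x = 0"
  shows "G u x = 0"
proof -
  have i: "integrable lborel (\<lambda>s. indicator {u<..} s * fT x s)"
    by (rule Bochner_Integration.integrable_bound[OF gx_int1[OF gx]])
       (measurable, auto intro!: AE_I2 simp: fT_nonneg split: split_indicator)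
  have "(\<integral>s. indicator {u<..} s * fT x s \<partial>lborel) = 0"
    using assms by (simp add: cond_surv_def set_lebesgue_integral_def)
  then have "AE s in lborel. indicator {u<..} s * fT x s = 0"
    using integral_nonneg_eq_0_iff_AE[OF i] by (simp add: fT_nonneg)
  then have "AE s in lborel. indicator {u<..} s *\<^sub>R ((s - cond_mean fT x) * fT x s) = 0"
    by eventually_elim (auto simp: indicator_def)
  then show ?thesis unfolding G_def set_lebesgue_integral_def by (rule integral_eq_zero_AE)
qed

lemma bstar_good: "nrwe_bstar nu fX fT t x = fX x * G t x / V"
proof (cases "cond_surv fT t x = 0")
  case True
  then show ?thesis using G_zero[OF True] by (simp add: nrwe_bstar_def nrwe_w_def)
next
  case False
  then show ?thesis
    by (simp add: nrwe_bstar_def nrwe_w_def cond_dev_gt_def G_def)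
qed

lemma G_bound: "\<bar>G u x\<bar> \<le> H x"
proof -
  have "\<bar>G u x\<bar> \<le> (\<integral>s. norm (indicator {u<..} s *\<^sub>R ((s - cond_mean fT x) * fT x s)) \<partial>lborel)"
    unfolding G_def set_lebesgue_integral_def
    using integral_norm_bound[of lborel "\<lambda>s. indicator {u<..} s *\<^sub>R ((s - cond_mean fT x) * fT x s)"] by simp
  also have "\<dots> \<le> H x"
    unfolding H_def
  proof (rule integral_mono)
    show "integrable lborel (\<lambda>s. \<bar>s - cond_mean fT x\<bar> * fT x s)"
      using integrable_abs[OF gx_int_w] by (simp add: abs_mult fT_nonneg)
    then show "integrable lborel (\<lambda>s. norm (indicator {u<..} s *\<^sub>R ((s - cond_mean fT x) * fT x s)))"
      by (rule Bochner_Integration.integrable_bound) (auto intro!: AE_I2 simp: abs_mult fT_nonneg split: split_indicator)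
  qed (auto simp: abs_mult fT_nonneg split: split_indicator)
  finally show ?thesis .
qed

lemma H_bound: "H x \<le> 1 + cond_var fT x"
proof -
  have "H x \<le> (\<integral>s. fT x s + (s - cond_mean fT x)\<^sup>2 * fT x s \<partial>lborel)"
    unfolding H_def
  proof (rule integral_mono)
    show "integrable lborel (\<lambda>s. \<bar>s - cond_mean fT x\<bar> * fT x s)"
      using integrable_abs[OF gx_int_w] by (simp add: abs_mult fT_nonneg)
    show "integrable lborel (\<lambda>s. fT x s + (s - cond_mean fT x)\<^sup>2 * fT x s)"
      using gx_int1[OF gx] gx_int_w2 by simp
    fix s
    have "\<bar>s - cond_mean fT x\<bar> \<le> 1 + (s - cond_mean fT x)\<^sup>2" by (rule abs_le_1_sq)
    from mult_right_mono[OF this fT_nonneg[of x s]]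
    show "\<bar>s - cond_mean fT x\<bar> * fT x s \<le> fT x s + (s - cond_mean fT x)\<^sup>2 * fT x s"
      by (simp add: algebra_simps)
  qed
  also have "\<dots> = 1 + cond_var fT x"
    using gx_int1[OF gx] gx_int_w2 gx_one[OF gx] by (simp add: cond_var_def)
  finally show ?thesis .
qed

lemma H_nonneg: "0 \<le> H x"
  unfolding H_def by (auto intro!: integral_nonneg_AE simp: fT_nonneg)

end

lemma int_fX: "integrable nu fX"
  using integrableI_nn_integral_finite[of fX nu 1] fX_prob by (simp add: fX_nonneg)

lemma int_fXvar: "integrable nu (\<lambda>x. fX x * cond_var fT x)"
  using int_P_integrable[OF int_TD] AE_TD
  by (subst integrable_cong_AE[symmetric]) (auto elim!: eventually_mono)

lemma emeasure_P: "emeasure P (space P) = 1"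
proof -
  have "emeasure P (space P) = (\<integral>\<^sup>+z. ennreal (fX (snd z) * fT (snd z) (fst z)) \<partial>(lborel \<Otimes>\<^sub>M nu))"
    unfolding joint_law_def
    by (subst emeasure_density) (auto simp: space_pair_measure intro!: nn_integral_cong)
  also have "\<dots> = (\<integral>\<^sup>+x. (\<integral>\<^sup>+t. ennreal (fX x * fT x t) \<partial>lborel) \<partial>nu)"
    by (subst pair_sigma_finite.nn_integral_snd[OF pair, symmetric]) auto
  also have "\<dots> = (\<integral>\<^sup>+x. ennreal (fX x) \<partial>nu)"
  proof (intro nn_integral_cong_AE)
    show "AE x in nu. (\<integral>\<^sup>+t. ennreal (fX x * fT x t) \<partial>lborel) = ennreal (fX x)"
      using AE_notgood
    proof eventually_elim
      case (elim x)
      have "(\<integral>\<^sup>+t. ennreal (fX x * fT x t) \<partial>lborel) = ennreal (fX x) * (\<integral>\<^sup>+t. ennreal (fT x t) \<partial>lborel)"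
        by (subst nn_integral_cmult[symmetric]) (auto simp: ennreal_mult fX_nonneg fT_nonneg intro!: nn_integral_cong)
      then show ?case using elim by (cases "goodx x") (auto simp: goodx_def)
    qed
  qed
  finally show ?thesis using fX_prob by simp
qed

lemma finP: "finite_measure P"
  by (rule finite_measureI) (simp add: emeasure_P)

lemma int_const: "integrable P (\<lambda>_. c)"
  using finite_measure.integrable_const[OF finP] .

end


context nrwe begin

lemma test_eq:
  fixes a :: "real \<Rightarrow> real^'k \<Rightarrow> real" and A :: "(real^'k) set" and \<phi> :: "real \<Rightarrow> real" and p q :: real
  assumes tf: "testfn \<phi> p q" and A[measurable]: "A \<in> sets nu"
    and hyp1: "\<And>m dm. admissible_dgp P m dm \<Longrightarrow>
                 ols_defined P (\<lambda>z. m (fst z) (snd z)) \<Longrightarrow>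
                 set_integrable (lborel \<Otimes>\<^sub>M nu) (UNIV \<times> S)
                    (\<lambda>z. dm (fst z) (snd z) * a (fst z) (snd z)) \<Longrightarrow>
                 ols_coef_T P (\<lambda>z. m (fst z) (snd z)) =
                   (LINT z:(UNIV \<times> S)|(lborel \<Otimes>\<^sub>M nu).
                      dm (fst z) (snd z) * a (fst z) (snd z))"
    and a_int: "set_integrable (lborel \<Otimes>\<^sub>M nu) (UNIV \<times> S) (\<lambda>z. a (fst z) (snd z))"
  shows "(LINT z:(UNIV \<times> S)|(lborel \<Otimes>\<^sub>M nu). (indicator A (snd z) * \<phi> (fst z)) * a (fst z) (snd z)) =
         (LINT z:(UNIV \<times> S)|(lborel \<Otimes>\<^sub>M nu). (indicator A (snd z) * \<phi> (fst z)) * nrwe_bstar nu fX fT (fst z) (snd z))"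
proof -
  interpret T: testfn \<phi> p q by (rule tf)
  note [measurable] = T.Phi_meas T.phi_meas
  define C where "C = q - p"
  have Cpos: "0 < C" using T.pq by (simp add: C_def)
  define K where "K x = max (-C) (min C (\<integral>s. T.Phi s * fT x s \<partial>lborel))" for x
  define m where "m t x = indicator A x * (T.Phi t - K x)" for t x
  define dm where "dm t x = indicator A x * \<phi> t" for t x
  define h where "h x = indicator A x * (\<integral>u. \<phi> u * G u x \<partial>lborel)" for x
  define B where "B = (LINT z:(UNIV \<times> S)|(lborel \<Otimes>\<^sub>M nu). dm (fst z) (snd z) * nrwe_bstar nu fX fT (fst z) (snd z))"
  have K_meas[measurable]: "K \<in> borel_measurable nu" unfolding K_def by measurable
  have m_meas[measurable]: "(\<lambda>z. m (fst z) (snd z)) \<in> borel_measurable (lborel \<Otimes>\<^sub>M nu)"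
    unfolding m_def by measurable
  have dm_meas[measurable]: "(\<lambda>z. dm (fst z) (snd z)) \<in> borel_measurable (lborel \<Otimes>\<^sub>M nu)"
    unfolding dm_def by measurable
  have h_meas[measurable]: "h \<in> borel_measurable nu"
    unfolding h_def G_def set_lebesgue_integral_def by measurable
  have Phi_b: "\<bar>T.Phi t\<bar> \<le> C" for t using T.Phi_bound by (simp add: C_def)
  have K_b: "\<bar>K x\<bar> \<le> C" for x using Cpos by (simp add: K_def)
  have m_b: "\<bar>m t x\<bar> \<le> 2 * C" for t x
  proof -
    have "\<bar>T.Phi t - K x\<bar> \<le> 2 * C" using Phi_b[of t] K_b[of x] by linarith
    then show ?thesis by (auto simp: m_def abs_mult indicator_def)
  qed
  have dm_b: "\<bar>dm t x\<bar> \<le> 1" for t x using T.bnd[of t] by (auto simp: dm_def abs_mult indicator_def)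

  have int_Phif: "integrable lborel (\<lambda>s. T.Phi s * fT x s)" if gx: "goodx x" for x
    by (rule Bochner_Integration.integrable_bound[OF integrable_mult_right[OF gx_int1[OF gx], of C]])
       (measurable, auto intro!: AE_I2 simp: abs_mult fT_nonneg space_nu abs_of_pos[OF Cpos] intro!: mult_right_mono Phi_b)
  have int_Phitf: "integrable lborel (\<lambda>s. T.Phi s * (s * fT x s))" if gx: "goodx x" for x
    by (rule Bochner_Integration.integrable_bound[OF integrable_mult_right[OF integrable_abs[OF gx_int_t[OF gx]], of C]])
       (measurable, auto intro!: AE_I2 simp: abs_mult fT_nonneg space_nu abs_of_pos[OF Cpos] intro!: mult_right_mono Phi_b)
  have K_good: "K x = (\<integral>s. T.Phi s * fT x s \<partial>lborel)" if gx: "goodx x" for x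
  proof -
    have "\<bar>\<integral>s. T.Phi s * fT x s \<partial>lborel\<bar> \<le> (\<integral>s. norm (T.Phi s * fT x s) \<partial>lborel)"
      using integral_norm_bound[of lborel "\<lambda>s. T.Phi s * fT x s"] by simp
    also have "\<dots> \<le> (\<integral>s. C * fT x s \<partial>lborel)"
      using integrable_norm[OF int_Phif[OF gx]] gx_int1[OF gx]
      by (intro integral_mono) (auto simp: abs_mult fT_nonneg intro!: mult_right_mono Phi_b)
    also have "\<dots> = C" using gx_one[OF gx] by simp
    finally show ?thesis unfolding K_def by (simp add: abs_le_iff)
  qed

  have adm: "admissible_dgp P m dm"
    unfolding admissible_dgp_def
  proof (intro conjI allI)
    fix x t
    show "((\<lambda>s. m s x) has_real_derivative dm t x) (at t)"
      unfolding m_def dm_def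
      using DERIV_cmult[OF DERIV_diff[OF T.Phi_deriv[of t] DERIV_const[where k="K x"]], where c="indicator A x"] by simp
  next
    fix x show "continuous_on UNIV (\<lambda>t. dm t x)"
      unfolding dm_def by (intro continuous_intros T.cont)
  next
    show "integrable P (\<lambda>z. dm (fst z) (snd z))"
      by (rule Bochner_Integration.integrable_bound[OF int_const[of "1::real"]])
         (measurable, auto intro!: AE_I2 simp: dm_b)
  qed

  define Y where "Y z = m (fst z) (snd z)" for z
  have Y_meas[measurable]: "Y \<in> borel_measurable (lborel \<Otimes>\<^sub>M nu)" unfolding Y_def by measurable
  have iT: "integrable P (\<lambda>z. Y z * fst z)"
  proof (rule Bochner_Integration.integrable_bound[OF Bochner_Integration.integrable_add[OF int_const[of "2*C"] integrable_mult_right[OF T_sq, of "2*C"]]])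
    show "(\<lambda>z. Y z * fst z) \<in> borel_measurable P" by measurable
    show "AE z in P. norm (Y z * fst z) \<le> norm (2 * C + 2 * C * (fst z)\<^sup>2)"
    proof (intro AE_I2)
      fix z :: "real \<times> (real^'k)"
      have "\<bar>Y z\<bar> * \<bar>fst z\<bar> \<le> (2 * C) * (1 + (fst z)\<^sup>2)"
        by (intro mult_mono m_b[unfolded] abs_le_1_sq) (auto simp: Y_def m_b Cpos less_imp_le)
      then show "norm (Y z * fst z) \<le> norm (2 * C + 2 * C * (fst z)\<^sup>2)"
        using Cpos by (simp add: abs_mult algebra_simps)
    qed
  qed
  have iX: "integrable P (\<lambda>z. Y z * snd z $ j)" for j
  proof (rule Bochner_Integration.integrable_bound[OF Bochner_Integration.integrable_add[OF int_const[of "2*C"] integrable_mult_right[OF X_sq[of j], of "2*C"]]])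
    show "(\<lambda>z. Y z * snd z $ j) \<in> borel_measurable P" by measurable
    show "AE z in P. norm (Y z * snd z $ j) \<le> norm (2 * C + 2 * C * (snd z $ j)\<^sup>2)"
    proof (intro AE_I2)
      fix z :: "real \<times> (real^'k)"
      have "\<bar>Y z\<bar> * \<bar>snd z $ j\<bar> \<le> (2 * C) * (1 + (snd z $ j)\<^sup>2)"
        by (intro mult_mono abs_le_1_sq) (auto simp: Y_def m_b Cpos less_imp_le)
      then show "norm (Y z * snd z $ j) \<le> norm (2 * C + 2 * C * (snd z $ j)\<^sup>2)"
        using Cpos by (simp add: abs_mult algebra_simps)
    qed
  qed
  have eX: "integral\<^sup>L P (\<lambda>z. Y z * snd z $ j) = 0" for j
  proof -
    have "integral\<^sup>L P (\<lambda>z. Y z * snd z $ j) = (\<integral>x. fX x * (\<integral>t. fT x t * (m t x * x $ j) \<partial>lborel) \<partial>nu)"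
      using int_P[OF iX[of j]] by (simp add: Y_def)
    also have "\<dots> = (\<integral>x. 0 \<partial>nu)"
    proof (intro integral_cong_AE)
      show "AE x in nu. fX x * (\<integral>t. fT x t * (m t x * x $ j) \<partial>lborel) = 0"
        using AE_notgood
      proof eventually_elim
        case (elim x)
        show ?case
        proof (cases "goodx x")
          case True
          have "(\<integral>t. fT x t * (m t x * x $ j) \<partial>lborel) =
                (\<integral>t. (indicator A x * x $ j) * (T.Phi t * fT x t) - (indicator A x * x $ j * K x) * fT x t \<partial>lborel)"
            by (intro Bochner_Integration.integral_cong) (auto simp: m_def algebra_simps)
          also have "\<dots> = 0"
            using int_Phif[OF True] gx_int1[OF True] gx_one[OF True] K_good[OF True] by simp
          finally show ?thesis by simp
        qed (use elim in simp)
      qed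
      show "(\<lambda>x. fX x * (\<integral>t. fT x t * (m t x * x $ j) \<partial>lborel)) \<in> borel_measurable nu"
        using borel_measurable_integrable[OF int_P_integrable[OF iX[of j]]] by (simp add: Y_def)
    qed simp
    finally show ?thesis by simp
  qed
  have eT1: "integral\<^sup>L P (\<lambda>z. Y z * fst z) = (\<integral>x. fX x * h x \<partial>nu)"
  proof -
    have "integral\<^sup>L P (\<lambda>z. Y z * fst z) = (\<integral>x. fX x * (\<integral>t. fT x t * (m t x * t) \<partial>lborel) \<partial>nu)"
      using int_P[OF iT] by (simp add: Y_def)
    also have "\<dots> = (\<integral>x. fX x * h x \<partial>nu)"
    proof (intro integral_cong_AE)
      show "AE x in nu. fX x * (\<integral>t. fT x t * (m t x * t) \<partial>lborel) = fX x * h x"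
        using AE_notgood
      proof eventually_elim
        case (elim x)
        show ?case
        proof (cases "goodx x")
          case True
          let ?mu = "cond_mean fT x"
          have w: "integrable lborel (\<lambda>s. (s - ?mu) * fT x s)" by (rule gx_int_w[OF True])
          have "(\<integral>t. fT x t * (m t x * t) \<partial>lborel) =
                (\<integral>t. indicator A x * (T.Phi t * (t * fT x t)) - (indicator A x * K x) * (t * fT x t) \<partial>lborel)"
            by (intro Bochner_Integration.integral_cong) (auto simp: m_def algebra_simps)
          also have "\<dots> = indicator A x * ((\<integral>t. T.Phi t * (t * fT x t) \<partial>lborel) - K x * ?mu)"
          proof -
            have "(\<integral>t. indicator A x * (T.Phi t * (t * fT x t)) - (indicator A x * K x) * (t * fT x t) \<partial>lborel)
               = indicator A x * (\<integral>t. T.Phi t * (t * fT x t) \<partial>lborel) - (indicator A x * K x) * (\<integral>t. t * fT x t \<partial>lborel)"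
              using int_Phitf[OF True] gx_int_t[OF True] by simp
            then show ?thesis by (simp add: cond_mean_def algebra_simps)
          qed
          also have "(\<integral>t. T.Phi t * (t * fT x t) \<partial>lborel) - K x * ?mu = (\<integral>t. T.Phi t * ((t - ?mu) * fT x t) \<partial>lborel)"
          proof -
            have "(\<integral>t. T.Phi t * ((t - ?mu) * fT x t) \<partial>lborel) =
                  (\<integral>t. T.Phi t * (t * fT x t) - ?mu * (T.Phi t * fT x t) \<partial>lborel)"
              by (intro Bochner_Integration.integral_cong) (auto simp: algebra_simps)
            also have "\<dots> = (\<integral>t. T.Phi t * (t * fT x t) \<partial>lborel) - ?mu * K x"
              using int_Phitf[OF True] int_Phif[OF True] K_good[OF True] by simp
            finally show ?thesis by simp
          qed
          also have "(\<integral>t. T.Phi t * ((t - ?mu) * fT x t) \<partial>lborel) = (\<integral>u. \<phi> u * G u x \<partial>lborel)"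
            unfolding T.yitz[OF w] G_def set_lebesgue_integral_def by simp
          finally show ?thesis by (simp add: h_def)
        qed (use elim in simp)
      qed
      show "(\<lambda>x. fX x * (\<integral>t. fT x t * (m t x * t) \<partial>lborel)) \<in> borel_measurable nu"
        using borel_measurable_integrable[OF int_P_integrable[OF iT]] by (simp add: Y_def)
    qed measurable
    finally show ?thesis .
  qed
  have VB: "V * B = (\<integral>x. fX x * h x \<partial>nu)"
  proof -
    define F where "F z = indicator (UNIV \<times> S) z *\<^sub>R (dm (fst z) (snd z) * nrwe_bstar nu fX fT (fst z) (snd z))" for z
    have F_meas[measurable]: "F \<in> borel_measurable (lborel \<Otimes>\<^sub>M nu)" unfolding F_def by measurable
    define c where "c x = C * (fX x + fX x * cond_var fT x) / V" for x
    have c_int: "integrable nu c"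
      unfolding c_def using int_fX int_fXvar by (intro integrable_divide integrable_mult_right Bochner_Integration.integrable_add)
    have c_nn: "AE x in nu. 0 \<le> c x"
      using AE_notgood
    proof eventually_elim
      case (elim x)
      then show ?case
        using gx_var[of x] V_pos Cpos fX_nonneg[of x] unfolding c_def
        by (cases "goodx x") (auto intro!: divide_nonneg_pos mult_nonneg_nonneg add_nonneg_nonneg)
    qed
    have Fzero: "x \<notin> S \<Longrightarrow> F (t, x) = 0" for t x by (simp add: F_def)
    have bound: "AE x in nu. (\<integral>\<^sup>+t. ennreal (norm (F (t, x))) \<partial>lborel) \<le> ennreal (c x)"
      using AE_good
    proof eventually_elim
      case (elim x)
      show ?case
      proof (cases "x \<in> S")
        case False
        then show ?thesis by (simp add: Fzero)
      next
        case True
        then have gx: "goodx x" using elim by simp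
        have fx: "0 \<le> fX x" by (rule fX_nonneg)
        have pt: "norm (F (t, x)) \<le> (fX x * (1 + cond_var fT x) / V) * indicator {p..q} t" for t
        proof -
          have "norm (F (t, x)) = \<bar>dm t x\<bar> * (fX x * \<bar>G t x\<bar> / V)"
            using True V_pos fx by (simp add: F_def bstar_good[OF gx] abs_mult)
          also have "\<dots> \<le> indicator {p..q} t * (fX x * (1 + cond_var fT x) / V)"
          proof (intro mult_mono divide_right_mono mult_left_mono)
            show "\<bar>dm t x\<bar> \<le> indicator {p..q} t"
              using T.phi_bound[of t] by (auto simp: dm_def abs_mult indicator_def)
            show "\<bar>G t x\<bar> \<le> 1 + cond_var fT x"
              using G_bound[OF gx, of t] H_bound[OF gx] by linarith
          qed (use V_pos fx gx_var[OF gx] in auto)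
          finally show ?thesis by (simp add: mult.commute)
        qed
        have "(\<integral>\<^sup>+t. ennreal (norm (F (t, x))) \<partial>lborel) \<le>
              (\<integral>\<^sup>+t. ennreal (fX x * (1 + cond_var fT x) / V) * indicator {p..q} t \<partial>lborel)"
        proof (rule nn_integral_mono)
          fix t
          have "ennreal (norm (F (t, x))) \<le> ennreal ((fX x * (1 + cond_var fT x) / V) * indicator {p..q} t)"
            by (rule ennreal_leI[OF pt])
          then show "ennreal (norm (F (t, x))) \<le> ennreal (fX x * (1 + cond_var fT x) / V) * indicator {p..q} t"
            by (auto split: split_indicator)
        qed
        also have "\<dots> = ennreal (fX x * (1 + cond_var fT x) / V) * ennreal C"
          using T.pq by (simp add: nn_integral_cmult_indicator C_def)
        also have "\<dots> = ennreal (c x)"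
          using V_pos fx gx_var[OF gx] Cpos
          by (simp add: c_def ennreal_mult[symmetric] algebra_simps)
        finally show ?thesis .
      qed
    qed
    have intF: "integrable (lborel \<Otimes>\<^sub>M nu) F"
    proof (rule integrableI_bounded)
      have "(\<integral>\<^sup>+z. ennreal (norm (F z)) \<partial>(lborel \<Otimes>\<^sub>M nu)) = (\<integral>\<^sup>+x. (\<integral>\<^sup>+t. ennreal (norm (F (t, x))) \<partial>lborel) \<partial>nu)"
        by (subst pair_sigma_finite.nn_integral_snd[OF pair, symmetric]) auto
      also have "\<dots> \<le> (\<integral>\<^sup>+x. ennreal (c x) \<partial>nu)"
        by (rule nn_integral_mono_AE[OF bound])
      also have "\<dots> = ennreal (\<integral>x. c x \<partial>nu)"
        by (rule nn_integral_eq_integral[OF c_int c_nn])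
      also have "\<dots> < \<infinity>" by simp
      finally show "(\<integral>\<^sup>+z. ennreal (norm (F z)) \<partial>(lborel \<Otimes>\<^sub>M nu)) < \<infinity>" .
    qed (rule F_meas)
    have "B = integral\<^sup>L (lborel \<Otimes>\<^sub>M nu) F"
      unfolding B_def set_lebesgue_integral_def F_def[abs_def] by simp
    also have "\<dots> = (\<integral>x. (\<integral>t. F (t, x) \<partial>lborel) \<partial>nu)"
      using pair_sigma_finite.integral_snd[OF pair, of "\<lambda>t x. F (t, x)"] intF by simp
    also have "\<dots> = (\<integral>x. fX x * h x / V \<partial>nu)"
    proof (intro integral_cong_AE)
      show "AE x in nu. (\<integral>t. F (t, x) \<partial>lborel) = fX x * h x / V"
        using AE_good
      proof eventually_elim
        case (elim x)
        show ?case
        proof (cases "x \<in> S")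
          case False
          then have "fX x = 0" using fX_nonneg[of x] by (simp add: supp_X_def)
          then show ?thesis using False by (simp add: Fzero)
        next
          case True
          then have gx: "goodx x" using elim by simp
          have "(\<integral>t. F (t, x) \<partial>lborel) = (\<integral>t. (indicator A x * fX x / V) * (\<phi> t * G t x) \<partial>lborel)"
            using True by (intro Bochner_Integration.integral_cong) (auto simp: F_def dm_def bstar_good[OF gx])
          also have "\<dots> = fX x * h x / V" by (simp add: h_def)
          finally show ?thesis .
        qed
      qed
    qed measurable
    also have "\<dots> = (\<integral>x. fX x * h x \<partial>nu) / V" by simp
    finally show ?thesis using V_pos by simp
  qed
  have olsY: "ols_defined P Y \<and> ols_coef_T P Y = B"
    by (rule ols[OF iT iX eX]) (simp add: eT1 VB)
  have ai: "integrable (lborel \<Otimes>\<^sub>M nu) (\<lambda>z. indicator (UNIV \<times> S) z *\<^sub>R a (fst z) (snd z))"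
    using a_int by (simp add: set_integrable_def)
  have si: "set_integrable (lborel \<Otimes>\<^sub>M nu) (UNIV \<times> S) (\<lambda>z. dm (fst z) (snd z) * a (fst z) (snd z))"
  proof -
    have eq: "(\<lambda>z. indicator (UNIV \<times> S) z *\<^sub>R (dm (fst z) (snd z) * a (fst z) (snd z))) =
              (\<lambda>z. dm (fst z) (snd z) * (indicator (UNIV \<times> S) z *\<^sub>R a (fst z) (snd z)))"
      by (auto simp: fun_eq_iff)
    have "integrable (lborel \<Otimes>\<^sub>M nu) (\<lambda>z. dm (fst z) (snd z) * (indicator (UNIV \<times> S) z *\<^sub>R a (fst z) (snd z)))"
    proof (rule Bochner_Integration.integrable_bound[OF integrable_norm[OF ai]])
      show "(\<lambda>z. dm (fst z) (snd z) * (indicator (UNIV \<times> S) z *\<^sub>R a (fst z) (snd z))) \<in> borel_measurable (lborel \<Otimes>\<^sub>M nu)"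
        using borel_measurable_times[OF dm_meas borel_measurable_integrable[OF ai]] by simp
      show "AE z in lborel \<Otimes>\<^sub>M nu. norm (dm (fst z) (snd z) * (indicator (UNIV \<times> S) z *\<^sub>R a (fst z) (snd z)))
              \<le> norm (norm (indicator (UNIV \<times> S) z *\<^sub>R a (fst z) (snd z)))"
      proof (intro AE_I2)
        fix z :: "real \<times> (real^'k)"
        show "norm (dm (fst z) (snd z) * (indicator (UNIV \<times> S) z *\<^sub>R a (fst z) (snd z)))
              \<le> norm (norm (indicator (UNIV \<times> S) z *\<^sub>R a (fst z) (snd z)))"
          using mult_right_mono[OF dm_b[of "fst z" "snd z"] abs_ge_zero[of "indicator (UNIV \<times> S) z *\<^sub>R a (fst z) (snd z)"]]
          by (simp add: abs_mult)
      qed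
    qed
    then show ?thesis unfolding set_integrable_def eq .
  qed
  have Yeq: "Y = (\<lambda>z. m (fst z) (snd z))" by (simp add: Y_def fun_eq_iff)
  have "ols_coef_T P (\<lambda>z. m (fst z) (snd z)) =
          (LINT z:(UNIV \<times> S)|(lborel \<Otimes>\<^sub>M nu). dm (fst z) (snd z) * a (fst z) (snd z))"
    by (rule hyp1[OF adm _ si]) (use olsY Yeq in simp)
  then have "(LINT z:(UNIV \<times> S)|(lborel \<Otimes>\<^sub>M nu). dm (fst z) (snd z) * a (fst z) (snd z)) = B"
    using olsY Yeq by simp
  then show ?thesis by (simp add: B_def dm_def)
qed

end


definition phin :: "real \<Rightarrow> real \<Rightarrow> nat \<Rightarrow> real \<Rightarrow> real" where
  "phin p q n u = max 0 (min 1 (min (real (Suc n) * (u - p)) (1 - real (Suc n) * (u - q))))"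

lemma testfn_phin:
  assumes "p < q"
  shows "testfn (phin p q n) p (q + 1)"
proof
  show "continuous_on UNIV (phin p q n)"
    unfolding phin_def by (intro continuous_intros)
  fix u
  show "\<bar>phin p q n u\<bar> \<le> 1" unfolding phin_def by auto
  assume u: "u \<le> p \<or> q + 1 \<le> u"
  show "phin p q n u = 0"
  proof (cases "u \<le> p")
    case True
    then have "real (Suc n) * (u - p) \<le> 0" by (intro mult_nonneg_nonpos) auto
    then show ?thesis unfolding phin_def by auto
  next
    case False
    then have "1 \<le> u - q" using u by auto
    then have "1 * 1 \<le> real (Suc n) * (u - q)" by (intro mult_mono) auto
    then have "1 - real (Suc n) * (u - q) \<le> 0" by simp
    then show ?thesis unfolding phin_def by auto
  qed
qed (use assms in simp)

lemma phin_lim: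
  assumes "p < q"
  shows "(\<lambda>n. phin p q n u) \<longlonglongrightarrow> indicator {p<..q} u"
proof (cases "u \<le> p")
  case True
  have "phin p q n u = 0" for n
    using testfn.supp[OF testfn_phin[OF assms, of n], of u] True by simp
  then show ?thesis using True by simp
next
  case False
  then have up: "0 < u - p" by simp
  obtain N :: nat where N: "1 / (u - p) < real N" using reals_Archimedean2 by blast
  show ?thesis
  proof (cases "u \<le> q")
    case True
    have "eventually (\<lambda>n. phin p q n u = 1) sequentially"
    proof (rule eventually_sequentiallyI[of N])
      fix n assume "N \<le> n"
      then have "1 / (u - p) < real (Suc n)" using N by linarith
      then have "1 < real (Suc n) * (u - p)" using up by (simp add: field_simps)
      moreover have "0 \<le> real (Suc n) * (q - u)" using True by simp
      ultimately show "phin p q n u = 1" unfolding phin_def by (auto simp: algebra_simps)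
    qed
    then have "(\<lambda>n. phin p q n u) \<longlonglongrightarrow> 1" by (rule tendsto_eventually)
    then show ?thesis using True False by simp
  next
    case False
    then have uq: "0 < u - q" by simp
    obtain M :: nat where M: "1 / (u - q) < real M" using reals_Archimedean2 by blast
    have "eventually (\<lambda>n. phin p q n u = 0) sequentially"
    proof (rule eventually_sequentiallyI[of M])
      fix n assume "M \<le> n"
      then have "1 / (u - q) < real (Suc n)" using M by linarith
      then have "1 < real (Suc n) * (u - q)" using uq by (simp add: field_simps)
      then show "phin p q n u = 0" unfolding phin_def by auto
    qed
    then have "(\<lambda>n. phin p q n u) \<longlonglongrightarrow> 0" by (rule tendsto_eventually)
    then show ?thesis using False by simp
  qed
qed

context nrwe begin

lemma bstar_box_int:
  assumes pq: "p \<le> q"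
  shows "integrable (lborel \<Otimes>\<^sub>M nu)
     (\<lambda>z. indicator (UNIV \<times> S) z * (indicator {p..q} (fst z) * \<bar>nrwe_bstar nu fX fT (fst z) (snd z)\<bar>))"
    (is "integrable _ ?F")
proof -
  define F where "F = ?F"
  have F_meas[measurable]: "F \<in> borel_measurable (lborel \<Otimes>\<^sub>M nu)" unfolding F_def by measurable
  define c where "c x = (q - p) * (fX x + fX x * cond_var fT x) / V" for x
  have c_int: "integrable nu c"
    unfolding c_def using int_fX int_fXvar by (intro integrable_divide integrable_mult_right Bochner_Integration.integrable_add)
  have c_nn: "AE x in nu. 0 \<le> c x"
    using AE_notgood
  proof eventually_elim
    case (elim x)
    then show ?case
      using gx_var[of x] V_pos pq fX_nonneg[of x] unfolding c_def
      by (cases "goodx x") (auto intro!: divide_nonneg_pos mult_nonneg_nonneg add_nonneg_nonneg)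
  qed
  have Fzero: "x \<notin> S \<Longrightarrow> F (t, x) = 0" for t x by (simp add: F_def)
  have bound: "AE x in nu. (\<integral>\<^sup>+t. ennreal (norm (F (t, x))) \<partial>lborel) \<le> ennreal (c x)"
    using AE_good
  proof eventually_elim
    case (elim x)
    show ?case
    proof (cases "x \<in> S")
      case False
      then show ?thesis by (simp add: Fzero)
    next
      case True
      then have gx: "goodx x" using elim by simp
      have fx: "0 \<le> fX x" by (rule fX_nonneg)
      have pt: "norm (F (t, x)) \<le> (fX x * (1 + cond_var fT x) / V) * indicator {p..q} t" for t
      proof -
        have "norm (F (t, x)) = indicator {p..q} t * (fX x * \<bar>G t x\<bar> / V)"
          using True V_pos fx by (simp add: F_def bstar_good[OF gx] abs_mult)
        also have "\<dots> \<le> indicator {p..q} t * (fX x * (1 + cond_var fT x) / V)"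
        proof (intro mult_left_mono divide_right_mono)
          show "\<bar>G t x\<bar> \<le> 1 + cond_var fT x"
            using G_bound[OF gx, of t] H_bound[OF gx] by linarith
        qed (use V_pos fx in auto)
        finally show ?thesis by (simp add: mult.commute)
      qed
      have "(\<integral>\<^sup>+t. ennreal (norm (F (t, x))) \<partial>lborel) \<le>
            (\<integral>\<^sup>+t. ennreal (fX x * (1 + cond_var fT x) / V) * indicator {p..q} t \<partial>lborel)"
      proof (rule nn_integral_mono)
        fix t
        have "ennreal (norm (F (t, x))) \<le> ennreal ((fX x * (1 + cond_var fT x) / V) * indicator {p..q} t)"
          by (rule ennreal_leI[OF pt])
        then show "ennreal (norm (F (t, x))) \<le> ennreal (fX x * (1 + cond_var fT x) / V) * indicator {p..q} t"
          by (auto split: split_indicator)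
      qed
      also have "\<dots> = ennreal (fX x * (1 + cond_var fT x) / V) * ennreal (q - p)"
        using pq by (simp add: nn_integral_cmult_indicator)
      also have "\<dots> = ennreal (c x)"
        using V_pos fx gx_var[OF gx] pq
        by (simp add: c_def ennreal_mult[symmetric] algebra_simps)
      finally show ?thesis .
    qed
  qed
  have "integrable (lborel \<Otimes>\<^sub>M nu) F"
  proof (rule integrableI_bounded)
    have "(\<integral>\<^sup>+z. ennreal (norm (F z)) \<partial>(lborel \<Otimes>\<^sub>M nu)) = (\<integral>\<^sup>+x. (\<integral>\<^sup>+t. ennreal (norm (F (t, x))) \<partial>lborel) \<partial>nu)"
      by (subst pair_sigma_finite.nn_integral_snd[OF pair, symmetric]) auto
    also have "\<dots> \<le> (\<integral>\<^sup>+x. ennreal (c x) \<partial>nu)"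
      by (rule nn_integral_mono_AE[OF bound])
    also have "\<dots> = ennreal (\<integral>x. c x \<partial>nu)"
      by (rule nn_integral_eq_integral[OF c_int c_nn])
    also have "\<dots> < \<infinity>" by simp
    finally show "(\<integral>\<^sup>+z. ennreal (norm (F z)) \<partial>(lborel \<Otimes>\<^sub>M nu)) < \<infinity>" .
  qed (rule F_meas)
  then show ?thesis by (simp add: F_def)
qed

lemma box_zero:
  fixes a :: "real \<Rightarrow> real^'k \<Rightarrow> real" and A :: "(real^'k) set"
  assumes pq: "p < q" and A[measurable]: "A \<in> sets nu"
    and hyp1: "\<And>m dm. admissible_dgp P m dm \<Longrightarrow>
                 ols_defined P (\<lambda>z. m (fst z) (snd z)) \<Longrightarrow>
                 set_integrable (lborel \<Otimes>\<^sub>M nu) (UNIV \<times> S)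
                    (\<lambda>z. dm (fst z) (snd z) * a (fst z) (snd z)) \<Longrightarrow>
                 ols_coef_T P (\<lambda>z. m (fst z) (snd z)) =
                   (LINT z:(UNIV \<times> S)|(lborel \<Otimes>\<^sub>M nu).
                      dm (fst z) (snd z) * a (fst z) (snd z))"
    and a_int: "set_integrable (lborel \<Otimes>\<^sub>M nu) (UNIV \<times> S) (\<lambda>z. a (fst z) (snd z))"
  defines "aS \<equiv> \<lambda>z. indicator (UNIV \<times> S) z *\<^sub>R a (fst z) (snd z)"
    and "bS \<equiv> \<lambda>z. indicator (UNIV \<times> S) z * nrwe_bstar nu fX fT (fst z) (snd z)"
  shows "integrable (lborel \<Otimes>\<^sub>M nu) (\<lambda>z. indicator ({p<..q} \<times> A) z * (aS z - bS z)) \<and>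
         (\<integral>z. indicator ({p<..q} \<times> A) z * (aS z - bS z) \<partial>(lborel \<Otimes>\<^sub>M nu)) = 0"
proof -
  have ai: "integrable (lborel \<Otimes>\<^sub>M nu) aS"
    using a_int by (simp add: set_integrable_def aS_def)
  have aS_meas[measurable]: "aS \<in> borel_measurable (lborel \<Otimes>\<^sub>M nu)"
    by (rule borel_measurable_integrable[OF ai])
  have bS_meas[measurable]: "bS \<in> borel_measurable (lborel \<Otimes>\<^sub>M nu)"
    unfolding bS_def by measurable
  have bw: "integrable (lborel \<Otimes>\<^sub>M nu)
     (\<lambda>z. indicator (UNIV \<times> S) z * (indicator {p..q+1} (fst z) * \<bar>nrwe_bstar nu fX fT (fst z) (snd z)\<bar>))"
    by (rule bstar_box_int) (use pq in simp)
  define sa where "sa n z = (indicator A (snd z) * phin p q n (fst z)) * aS z" for n z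
  define sb where "sb n z = (indicator A (snd z) * phin p q n (fst z)) * bS z" for n z
  have phin_meas[measurable]: "phin p q n \<in> borel_measurable borel" for n
    using testfn.phi_meas[OF testfn_phin[OF pq, of n]] .
  have sa_meas[measurable]: "sa n \<in> borel_measurable (lborel \<Otimes>\<^sub>M nu)" for n
    unfolding sa_def by measurable
  have sb_meas[measurable]: "sb n \<in> borel_measurable (lborel \<Otimes>\<^sub>M nu)" for n
    unfolding sb_def by measurable
  have eqn: "integral\<^sup>L (lborel \<Otimes>\<^sub>M nu) (sa n) = integral\<^sup>L (lborel \<Otimes>\<^sub>M nu) (sb n)" for n
  proof -
    have "(LINT z:(UNIV \<times> S)|(lborel \<Otimes>\<^sub>M nu). (indicator A (snd z) * phin p q n (fst z)) * a (fst z) (snd z)) =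
         (LINT z:(UNIV \<times> S)|(lborel \<Otimes>\<^sub>M nu). (indicator A (snd z) * phin p q n (fst z)) * nrwe_bstar nu fX fT (fst z) (snd z))"
      by (rule test_eq[OF testfn_phin[OF pq, of n] A hyp1 a_int])
    moreover have "(LINT z:(UNIV \<times> S)|(lborel \<Otimes>\<^sub>M nu). (indicator A (snd z) * phin p q n (fst z)) * a (fst z) (snd z))
        = integral\<^sup>L (lborel \<Otimes>\<^sub>M nu) (sa n)"
      unfolding set_lebesgue_integral_def sa_def aS_def by (intro Bochner_Integration.integral_cong) auto
    moreover have "(LINT z:(UNIV \<times> S)|(lborel \<Otimes>\<^sub>M nu). (indicator A (snd z) * phin p q n (fst z)) * nrwe_bstar nu fX fT (fst z) (snd z))
        = integral\<^sup>L (lborel \<Otimes>\<^sub>M nu) (sb n)"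
      unfolding set_lebesgue_integral_def sb_def bS_def by (intro Bochner_Integration.integral_cong) auto
    ultimately show ?thesis by simp
  qed
  define fa where "fa z = indicator ({p<..q} \<times> A) z * aS z" for z
  define fb where "fb z = indicator ({p<..q} \<times> A) z * bS z" for z
  have fa_meas[measurable]: "fa \<in> borel_measurable (lborel \<Otimes>\<^sub>M nu)" unfolding fa_def by measurable
  have fb_meas[measurable]: "fb \<in> borel_measurable (lborel \<Otimes>\<^sub>M nu)" unfolding fb_def by measurable
  have lima: "AE z in lborel \<Otimes>\<^sub>M nu. (\<lambda>n. sa n z) \<longlonglongrightarrow> fa z"
  proof (intro AE_I2)
    fix z :: "real \<times> (real^'k)"
    have "(\<lambda>n. (indicator A (snd z) * phin p q n (fst z)) * aS z) \<longlonglongrightarrow> (indicator A (snd z) * indicator {p<..q} (fst z)) * aS z"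
      by (intro tendsto_intros phin_lim[OF pq])
    moreover have "fa z = (indicator A (snd z) * indicator {p<..q} (fst z)) * aS z"
      unfolding fa_def indicator_times by (simp add: mult_ac)
    ultimately show "(\<lambda>n. sa n z) \<longlonglongrightarrow> fa z"
      unfolding sa_def by simp
  qed
  have limb: "AE z in lborel \<Otimes>\<^sub>M nu. (\<lambda>n. sb n z) \<longlonglongrightarrow> fb z"
  proof (intro AE_I2)
    fix z :: "real \<times> (real^'k)"
    have "(\<lambda>n. (indicator A (snd z) * phin p q n (fst z)) * bS z) \<longlonglongrightarrow> (indicator A (snd z) * indicator {p<..q} (fst z)) * bS z"
      by (intro tendsto_intros phin_lim[OF pq])
    moreover have "fb z = (indicator A (snd z) * indicator {p<..q} (fst z)) * bS z"
      unfolding fb_def indicator_times by (simp add: mult_ac)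
    ultimately show "(\<lambda>n. sb n z) \<longlonglongrightarrow> fb z"
      unfolding sb_def by simp
  qed
  have boa: "AE z in lborel \<Otimes>\<^sub>M nu. norm (sa n z) \<le> norm (aS z)" for n
  proof (intro AE_I2)
    fix z :: "real \<times> (real^'k)"
    have "\<bar>indicator A (snd z) * phin p q n (fst z)\<bar> \<le> 1"
      using testfn.bnd[OF testfn_phin[OF pq, of n], of "fst z"] by (auto simp: abs_mult indicator_def)
    from mult_right_mono[OF this abs_ge_zero[of "aS z"]]
    show "norm (sa n z) \<le> norm (aS z)" by (simp add: sa_def abs_mult)
  qed
  have bob: "AE z in lborel \<Otimes>\<^sub>M nu. norm (sb n z) \<le>
      indicator (UNIV \<times> S) z * (indicator {p..q+1} (fst z) * \<bar>nrwe_bstar nu fX fT (fst z) (snd z)\<bar>)" for n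
  proof (intro AE_I2)
    fix z :: "real \<times> (real^'k)"
    have "\<bar>indicator A (snd z) * phin p q n (fst z)\<bar> \<le> indicator {p..q+1} (fst z)"
      using testfn.phi_bound[OF testfn_phin[OF pq, of n], of "fst z"] by (auto simp: abs_mult indicator_def)
    from mult_right_mono[OF this abs_ge_zero[of "bS z"]]
    show "norm (sb n z) \<le> indicator (UNIV \<times> S) z * (indicator {p..q+1} (fst z) * \<bar>nrwe_bstar nu fX fT (fst z) (snd z)\<bar>)"
      by (auto simp: sb_def bS_def abs_mult indicator_def)
  qed
  have ia: "integrable (lborel \<Otimes>\<^sub>M nu) fa"
    by (rule integrable_dominated_convergence[OF fa_meas sa_meas integrable_norm[OF ai] lima boa])
  have ib: "integrable (lborel \<Otimes>\<^sub>M nu) fb"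
    by (rule integrable_dominated_convergence[OF fb_meas sb_meas bw limb bob])
  have la: "(\<lambda>n. integral\<^sup>L (lborel \<Otimes>\<^sub>M nu) (sa n)) \<longlonglongrightarrow> integral\<^sup>L (lborel \<Otimes>\<^sub>M nu) fa"
    by (rule integral_dominated_convergence[OF fa_meas sa_meas integrable_norm[OF ai] lima boa])
  have lb: "(\<lambda>n. integral\<^sup>L (lborel \<Otimes>\<^sub>M nu) (sb n)) \<longlonglongrightarrow> integral\<^sup>L (lborel \<Otimes>\<^sub>M nu) fb"
    by (rule integral_dominated_convergence[OF fb_meas sb_meas bw limb bob])
  have "integral\<^sup>L (lborel \<Otimes>\<^sub>M nu) fa = integral\<^sup>L (lborel \<Otimes>\<^sub>M nu) fb"
  proof -
    have "(\<lambda>n. integral\<^sup>L (lborel \<Otimes>\<^sub>M nu) (sb n)) \<longlonglongrightarrow> integral\<^sup>L (lborel \<Otimes>\<^sub>M nu) fa"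
      using la by (simp only: eqn)
    from LIMSEQ_unique[OF this lb] show ?thesis .
  qed
  moreover have "(\<lambda>z. indicator ({p<..q} \<times> A) z * (aS z - bS z)) = (\<lambda>z. fa z - fb z)"
    by (auto simp: fun_eq_iff fa_def fb_def algebra_simps)
  ultimately show ?thesis using ia ib by simp
qed

end


context nrwe begin

lemma final_AE:
  fixes g :: "real \<times> (real^'k) \<Rightarrow> real"
  assumes g_meas[measurable]: "g \<in> borel_measurable (lborel \<Otimes>\<^sub>M nu)"
    and box: "\<And>p q A. p < q \<Longrightarrow> A \<in> sets nu \<Longrightarrow>
       integrable (lborel \<Otimes>\<^sub>M nu) (\<lambda>z. indicator ({p<..q} \<times> A) z * g z) \<and>
       (\<integral>z. indicator ({p<..q} \<times> A) z * g z \<partial>(lborel \<Otimes>\<^sub>M nu)) = 0"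
  shows "AE z in lborel \<Otimes>\<^sub>M nu. g z = 0"
proof -
  let ?M = "lborel \<Otimes>\<^sub>M nu"
  have sfM: "sigma_finite_measure ?M"
    by (rule sigma_finite_pair_measure[OF lborel.sigma_finite_measure_axioms sf])
  define Gen where "Gen = {a \<times> b | a b. a \<in> range (\<lambda>(x, y). {x<..y::real}) \<and> b \<in> sets nu}"
  define N1 where "N1 = density ?M (\<lambda>z. ennreal (g z))"
  define N2 where "N2 = density ?M (\<lambda>z. ennreal (- g z))"
  have sets_M: "sets ?M = sigma_sets UNIV Gen"
  proof -
    have l: "sets lborel = sets (sigma UNIV (range (\<lambda>(a, b). {a<..b::real})))"
      using borel_sigma_sets_Ioc by simp
    have n: "sets nu = sets (sigma UNIV (sets nu))"
      using sets.sigma_sets_eq[of nu] space_nu by (simp add: sets_measure_of sets.sets_into_space)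
    have "sets ?M = sets (sigma UNIV (range (\<lambda>(a, b). {a<..b::real})) \<Otimes>\<^sub>M sigma UNIV (sets nu))"
      by (rule sets_pair_measure_cong[OF l n])
    also have "sigma UNIV (range (\<lambda>(a, b). {a<..b::real})) \<Otimes>\<^sub>M sigma UNIV (sets nu) = sigma (UNIV \<times> UNIV) Gen"
      unfolding Gen_def
    proof (rule sigma_prod)
      show "\<exists>E\<subseteq>range (\<lambda>(a, b). {a<..b::real}). countable E \<and> UNIV = \<Union> E"
      proof (intro exI conjI)
        show "range (\<lambda>n::nat. {- real n<..real n}) \<subseteq> range (\<lambda>(a, b). {a<..b::real})" by auto
        show "countable (range (\<lambda>n::nat. {- real n<..real n}))" by simp
        show "UNIV = \<Union> (range (\<lambda>n::nat. {- real n<..real n}))"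
        proof (safe)
          fix x :: real
          obtain n :: nat where "\<bar>x\<bar> < real n" using reals_Archimedean2 by blast
          then show "x \<in> \<Union> (range (\<lambda>n::nat. {- real n<..real n}))" by (auto intro!: exI[of _ n])
        qed auto
      qed
      show "\<exists>E\<subseteq>sets nu. countable E \<and> UNIV = \<Union> E"
        by (intro exI[of _ "{UNIV}"]) (auto simp: sets.top[of nu, unfolded space_nu])
    qed auto
    also have "sets (sigma (UNIV \<times> UNIV) Gen) = sigma_sets UNIV Gen"
      by (simp add: sets_measure_of)
    finally show ?thesis .
  qed
  have GenI: "B \<in> sets nu \<Longrightarrow> {x<..y} \<times> B \<in> Gen" for x y :: real and B
  proof -
    assume B: "B \<in> sets nu"
    have r: "{x<..y} \<in> range (\<lambda>(x, y). {x<..y::real})" by (rule image_eqI[where x="(x,y)"]) auto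
    show ?thesis unfolding Gen_def
      apply (rule CollectI)
      apply (rule exI[where x="{x<..y}"])
      apply (rule exI[where x=B])
      using r B by simp
  qed
  have GenE: "\<exists>a b B. X = {a<..b} \<times> B \<and> B \<in> sets nu" if "X \<in> Gen" for X
  proof -
    from that obtain I B where "X = I \<times> B" "I \<in> range (\<lambda>(x, y). {x<..y::real})" "B \<in> sets nu"
      unfolding Gen_def by blast
    then show ?thesis by auto
  qed
  have box': "integrable ?M (\<lambda>z. indicator X z * g z) \<and> (\<integral>z. indicator X z * g z \<partial>?M) = 0" if "X \<in> Gen" for X
  proof -
    from GenE[OF that] obtain a b B where X: "X = {a<..b} \<times> B" and B: "B \<in> sets nu" by blast
    show ?thesis
    proof (cases "a < b")
      case True then show ?thesis using box[OF True B] X by simp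
    next
      case False then have "X = {}" using X by auto
      then show ?thesis by simp
    qed
  qed
  have gm1: "(\<lambda>z. ennreal (g z)) \<in> borel_measurable ?M" by measurable
  have gm2: "(\<lambda>z. ennreal (- g z)) \<in> borel_measurable ?M" by measurable
  have Gen_sets: "X \<in> sets ?M" if "X \<in> Gen" for X
    unfolding sets_M using that by (rule sigma_sets.Basic)
  have eq: "emeasure N1 X = emeasure N2 X" if X: "X \<in> Gen" for X
  proof -
    have XM[measurable]: "X \<in> sets ?M" by (rule Gen_sets[OF X])
    define f where "f z = indicator X z * g z" for z
    have fi: "integrable ?M f" using box'[OF X] by (simp add: f_def[abs_def])
    have f0: "integral\<^sup>L ?M f = 0" using box'[OF X] by (simp add: f_def[abs_def])
    have e1: "emeasure N1 X = (\<integral>\<^sup>+z. ennreal (f z) \<partial>?M)"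
    proof -
      have "emeasure N1 X = (\<integral>\<^sup>+z. ennreal (g z) * indicator X z \<partial>?M)"
        unfolding N1_def by (rule emeasure_density[OF gm1 XM])
      also have "\<dots> = (\<integral>\<^sup>+z. ennreal (f z) \<partial>?M)"
        by (rule nn_integral_cong) (simp add: f_def split: split_indicator)
      finally show ?thesis .
    qed
    have e2: "emeasure N2 X = (\<integral>\<^sup>+z. ennreal (- f z) \<partial>?M)"
    proof -
      have "emeasure N2 X = (\<integral>\<^sup>+z. ennreal (- g z) * indicator X z \<partial>?M)"
        unfolding N2_def by (rule emeasure_density[OF gm2 XM])
      also have "\<dots> = (\<integral>\<^sup>+z. ennreal (- f z) \<partial>?M)"
        by (rule nn_integral_cong) (simp add: f_def split: split_indicator)
      finally show ?thesis .
    qed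
    from fi have fin: "(\<integral>\<^sup>+z. ennreal (f z) \<partial>?M) \<noteq> \<infinity>" "(\<integral>\<^sup>+z. ennreal (- f z) \<partial>?M) \<noteq> \<infinity>"
      unfolding real_integrable_def by auto
    have "enn2real (\<integral>\<^sup>+z. ennreal (f z) \<partial>?M) = enn2real (\<integral>\<^sup>+z. ennreal (- f z) \<partial>?M)"
      using real_lebesgue_integral_def[OF fi] f0 by simp
    then have "(\<integral>\<^sup>+z. ennreal (f z) \<partial>?M) = (\<integral>\<^sup>+z. ennreal (- f z) \<partial>?M)"
    proof -
      assume eqr: "enn2real (\<integral>\<^sup>+z. ennreal (f z) \<partial>?M) = enn2real (\<integral>\<^sup>+z. ennreal (- f z) \<partial>?M)"
      have "(\<integral>\<^sup>+z. ennreal (f z) \<partial>?M) = ennreal (enn2real (\<integral>\<^sup>+z. ennreal (f z) \<partial>?M))"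
        using fin(1) by (simp add: less_top)
      also have "\<dots> = ennreal (enn2real (\<integral>\<^sup>+z. ennreal (- f z) \<partial>?M))"
        by (simp only: eqr)
      also have "\<dots> = (\<integral>\<^sup>+z. ennreal (- f z) \<partial>?M)"
        using fin(2) by (simp add: less_top)
      finally show ?thesis .
    qed
    then show ?thesis using e1 e2 by simp
  qed
  have "N1 = N2"
  proof (rule measure_eqI_generator_eq[where E=Gen and \<Omega>=UNIV and A="\<lambda>i. {- real (Suc i)<..real (Suc i)} \<times> UNIV"])
    show "Int_stable Gen"
    proof (rule Int_stableI)
      fix X Y assume "X \<in> Gen" "Y \<in> Gen"
      then obtain a b B c d D where X: "X = {a<..b} \<times> B" "B \<in> sets nu" and Y: "Y = {c<..d} \<times> D" "D \<in> sets nu"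
        using GenE by metis
      have iv: "{a<..b} \<inter> {c<..d} = {max a c<..min b d}"
        by (auto simp: max_less_iff_conj)
      have "X \<inter> Y = {max a c<..min b d} \<times> (B \<inter> D)" using X Y iv by (simp add: Times_Int_Times)
      moreover have "B \<inter> D \<in> sets nu" using X Y by (intro sets.Int)
      moreover have "{max a c<..min b d} \<in> range (\<lambda>(x, y). {x<..y::real})"
        by (rule image_eqI[where x="(max a c, min b d)"]) auto
      ultimately show "X \<inter> Y \<in> Gen" using GenI by metis
    qed
    show "Gen \<subseteq> Pow UNIV" by simp
    show "sets N1 = sigma_sets UNIV Gen" unfolding N1_def using sets_M by simp
    show "sets N2 = sigma_sets UNIV Gen" unfolding N2_def using sets_M by simp
    show "range (\<lambda>i. {- real (Suc i)<..real (Suc i)} \<times> UNIV) \<subseteq> Gen"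
      using GenI[OF sets.top[of nu, unfolded space_nu]] by blast
    show "(\<Union>i. {- real (Suc i)<..real (Suc i)} \<times> UNIV) = (UNIV :: (real \<times> (real^'k)) set)"
    proof safe
      fix x :: real and y :: "real^'k"
      obtain n :: nat where "\<bar>x\<bar> < real n" using reals_Archimedean2 by blast
      then show "(x, y) \<in> (\<Union>i. {- real (Suc i)<..real (Suc i)} \<times> UNIV)" by (auto intro!: exI[of _ n])
    qed auto
    fix i :: nat
    have X: "{- real (Suc i)<..real (Suc i)} \<times> UNIV \<in> Gen"
      by (rule GenI[OF sets.top[of nu, unfolded space_nu]])
    have fi: "integrable ?M (\<lambda>z. indicator ({- real (Suc i)<..real (Suc i)} \<times> UNIV) z * g z)"
      using box'[OF X] by simp
    have "emeasure N1 ({- real (Suc i)<..real (Suc i)} \<times> UNIV) =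
       (\<integral>\<^sup>+z. ennreal (indicator ({- real (Suc i)<..real (Suc i)} \<times> UNIV) z * g z) \<partial>?M)"
    proof -
      have "emeasure N1 ({- real (Suc i)<..real (Suc i)} \<times> UNIV) = (\<integral>\<^sup>+z. ennreal (g z) * indicator ({- real (Suc i)<..real (Suc i)} \<times> UNIV) z \<partial>?M)"
        unfolding N1_def by (rule emeasure_density[OF gm1 Gen_sets[OF X]])
      also have "\<dots> = (\<integral>\<^sup>+z. ennreal (indicator ({- real (Suc i)<..real (Suc i)} \<times> UNIV) z * g z) \<partial>?M)"
        by (rule nn_integral_cong) (simp split: split_indicator)
      finally show ?thesis .
    qed
    also have "\<dots> \<noteq> \<infinity>" using fi unfolding real_integrable_def by auto
    finally show "emeasure N1 ({- real (Suc i)<..real (Suc i)} \<times> UNIV) \<noteq> \<infinity>" .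
  qed (rule eq)
  then have "AE z in ?M. ennreal (g z) = ennreal (- g z)"
    unfolding N1_def N2_def
    by (rule sigma_finite_measure.density_unique[OF sfM gm1 gm2])
  then show ?thesis
  proof eventually_elim
    case (elim z)
    show ?case
    proof (rule ccontr)
      assume "g z \<noteq> 0"
      have "ennreal (- g z) = 0 \<or> ennreal (g z) = 0"
        by (cases "g z \<ge> 0") (auto simp: ennreal_eq_0_iff)
      with elim have "ennreal (g z) = 0 \<and> ennreal (- g z) = 0" by auto
      then have "g z \<le> 0 \<and> - g z \<le> 0" by (simp only: ennreal_eq_0_iff)
      with \<open>g z \<noteq> 0\<close> show False by linarith
    qed
  qed
qed

end


theorem proposition2:
  fixes nu :: "(real^'k) measure"
    and fX :: "real^'k \<Rightarrow> real"
    and fT :: "real^'k \<Rightarrow> real \<Rightarrow> real"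
    and a :: "real \<Rightarrow> real^'k \<Rightarrow> real"
  assumes nu: "sigma_finite_measure nu" "sets nu = sets borel"
    and fX_meas: "fX \<in> borel_measurable nu"
    and fX_nonneg: "\<And>x. 0 \<le> fX x"
    and fX_prob: "(\<integral>\<^sup>+x. ennreal (fX x) \<partial>nu) = 1"
    and fT_meas: "(\<lambda>z. fT (snd z) (fst z)) \<in> borel_measurable (lborel \<Otimes>\<^sub>M nu)"
    and fT_nonneg: "\<And>x t. 0 \<le> fT x t"
    and fT_cond: "AE x in nu. x \<in> supp_X fX \<longrightarrow>
           (\<integral>\<^sup>+t. ennreal (fT x t) \<partial>lborel) = 1 \<and>
           integrable lborel (\<lambda>t. t\<^sup>2 * fT x t) \<and> 0 < cond_var fT x"
    and const: "\<exists>j. \<forall>x \<in> supp_X fX. x $ j = 1"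
    and lin_mean: "\<exists>\<gamma>::real^'k. AE x in nu. x \<in> supp_X fX \<longrightarrow> cond_mean fT x = inner \<gamma> x"
    and T_sq: "integrable (joint_law nu fX fT) (\<lambda>z. (fst z)\<^sup>2)"
    and X_sq: "\<And>j. integrable (joint_law nu fX fT) (\<lambda>z. (snd z $ j)\<^sup>2)"
    and hyp1: "\<And>m dm. admissible_dgp (joint_law nu fX fT) m dm \<Longrightarrow>
                 ols_defined (joint_law nu fX fT) (\<lambda>z. m (fst z) (snd z)) \<Longrightarrow>
                 set_integrable (lborel \<Otimes>\<^sub>M nu) (UNIV \<times> supp_X fX)
                    (\<lambda>z. dm (fst z) (snd z) * a (fst z) (snd z)) \<Longrightarrow>
                 ols_coef_T (joint_law nu fX fT) (\<lambda>z. m (fst z) (snd z)) =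
                   (LINT z:(UNIV \<times> supp_X fX)|(lborel \<Otimes>\<^sub>M nu).
                      dm (fst z) (snd z) * a (fst z) (snd z))"
    and a_cont: "\<And>x. x \<in> supp_X fX \<Longrightarrow> continuous_on UNIV (\<lambda>t. a t x)"
    and a_diff: "\<And>x t. x \<in> supp_X fX \<Longrightarrow> (\<lambda>s. a s x) differentiable (at t)"
    and a_int: "set_integrable (lborel \<Otimes>\<^sub>M nu) (UNIV \<times> supp_X fX) (\<lambda>z. a (fst z) (snd z))"
  shows "AE z in (lborel \<Otimes>\<^sub>M nu). snd z \<in> supp_X fX \<longrightarrow>
           a (fst z) (snd z) = nrwe_bstar nu fX fT (fst z) (snd z)"
proof -
  obtain \<gamma> :: "real^'k" where gam: "AE x in nu. x \<in> supp_X fX \<longrightarrow> cond_mean fT x = inner \<gamma> x"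
    using lin_mean by blast
  have goodN: "AE x in nu. x \<in> supp_X fX \<longrightarrow>
           (\<integral>\<^sup>+t. ennreal (fT x t) \<partial>lborel) = 1 \<and>
           integrable lborel (\<lambda>t. t\<^sup>2 * fT x t) \<and> 0 < cond_var fT x \<and> cond_mean fT x = inner \<gamma> x"
    using fT_cond gam by eventually_elim blast
  interpret N: nrwe nu fX fT \<gamma>
    by (rule nrwe.intro[OF nu fX_meas fX_nonneg fX_prob fT_meas fT_nonneg goodN T_sq X_sq])
  define aS where "aS z = indicator (UNIV \<times> supp_X fX) z *\<^sub>R a (fst z) (snd z)" for z
  define bS where "bS z = indicator (UNIV \<times> supp_X fX) z * nrwe_bstar nu fX fT (fst z) (snd z)" for z
  have ai: "integrable (lborel \<Otimes>\<^sub>M nu) aS"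
    using a_int by (simp add: set_integrable_def aS_def[abs_def])
  have aS_meas[measurable]: "aS \<in> borel_measurable (lborel \<Otimes>\<^sub>M nu)"
    by (rule borel_measurable_integrable[OF ai])
  have bS_meas[measurable]: "bS \<in> borel_measurable (lborel \<Otimes>\<^sub>M nu)"
    unfolding bS_def by measurable
  have gm: "(\<lambda>z. aS z - bS z) \<in> borel_measurable (lborel \<Otimes>\<^sub>M nu)" by measurable
  have "AE z in lborel \<Otimes>\<^sub>M nu. aS z - bS z = 0"
  proof (rule N.final_AE[OF gm])
    fix p q :: real and A assume "p < q" "A \<in> sets nu"
    from N.box_zero[OF this hyp1 a_int]
    show "integrable (lborel \<Otimes>\<^sub>M nu) (\<lambda>z. indicator ({p<..q} \<times> A) z * (aS z - bS z)) \<and>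
       (\<integral>z. indicator ({p<..q} \<times> A) z * (aS z - bS z) \<partial>(lborel \<Otimes>\<^sub>M nu)) = 0"
      by (simp add: aS_def bS_def)
  qed
  then show ?thesis
    by eventually_elim (auto simp: aS_def bS_def)
qed

end
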